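(* Let $N=2^n$ and let ${\cal B}:\mathbb{C}^{N\times N}\to\mathbb{C}^m$ be a linear map such that ${\cal B}{\cal H}^{-1}:\mathbb{C}^{N\times N}\to\mathbb{C}^m$ has the restricted isometry property of order $2s$ and level $\delta<1$, where ${\cal H}$ is the discrete bivariate Haar transform. Suppose that $\mathbf{D}\in\mathbb{C}^{N\times N}$ satisfies the tube constraint $\|{\cal B}(\mathbf{D})\|_2\le\varepsilon$. Then $$\|\mathbf{D}\|_2\lesssim\Big(\frac{\|\mathbf{D}\|_{TV}}{\sqrt{s}}\Big)\log(N^2/s)+\varepsilon.$$
   Context: Notation: $u\lesssim v$ means $u\le Cv$ for a constant $C>0$ (called absolute in the paper). $\|\cdot\|_2$ is the entrywise (Frobenius) norm. A linear map has the restricted isometry property of order $s$ and level $\delta$ if $(1-\delta)\|\mathbf{X}\|_2^2\le\|{\cal B}{\cal H}^{-1}(\mathbf{X})\|_2^2\le(1+\delta)\|\mathbf{X}\|_2^2$ (stated here for ${\cal B}{\cal H}^{-1}$) for all $\mathbf{X}$ with at most $s$ nonzero entries. Anisotropic total variation: $\|\mathbf{X}\|_{TV}=\sum_{j=1}^{N-1}\sum_{k=1}^N|X_{j+1,k}-X_{j,k}|+\sum_{j=1}^N\sum_{k=1}^{N-1}|X_{j,k+1}-X_{j,k}|$. Haar transform: $H^0=\mathbf{1}_{[0,1)}$, $H^1=\mathbf{1}_{[0,1/2)}-\mathbf{1}_{[1/2,1)}$; for $e=(e_1,e_2)\in\{(0,1),(1,0),(1,1)\}$, $H^e(u,v)=H^{e_1}(u)H^{e_2}(v)$,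 $H^e_{j,k}(x)=2^jH^e(2^jx-k)$, $j\ge0$, $k\in\mathbb{Z}^2\cap2^j[0,1)^2$. Identifying $\mathbf{X}\in\mathbb{C}^{N\times N}$ isometrically with the function equal to $NX_{j,k}$ on $[\frac{j-1}{N},\frac jN)\times[\frac{k-1}{N},\frac kN)$, the constant function and $\{H^e_{j,k}:j\le n-1\}$ give an orthonormal basis of $\mathbb{C}^{N\times N}$ (inner product $\mathrm{tr}(\mathbf{X}\mathbf{Y}^* )$); ${\cal H}(\mathbf{X})$ is the $N\times N$ array of coefficients of $\mathbf{X}$ in this basis. *)

theory Defs
  imports "HOL-Analysis.Analysis"
begin

text \<open>N x N complex matrices are functions nat => nat => complex, rows/columns indexed
  0..N-1 (0-based), vanishing outside the index range. Vectors in C^m are nat => complex;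
  only the entries 0..m-1 are relevant.\<close>

definition mats :: "nat \<Rightarrow> (nat \<Rightarrow> nat \<Rightarrow> complex) set" where
  "mats N = {X. \<forall>j k. (N \<le> j \<or> N \<le> k) \<longrightarrow> X j k = 0}"

definition fro :: "nat \<Rightarrow> (nat \<Rightarrow> nat \<Rightarrow> complex) \<Rightarrow> real" where
  "fro N X = sqrt (\<Sum>j<N. \<Sum>k<N. (cmod (X j k))\<^sup>2)"

definition vnorm :: "nat \<Rightarrow> (nat \<Rightarrow> complex) \<Rightarrow> real" where
  "vnorm m v = sqrt (\<Sum>i<m. (cmod (v i))\<^sup>2)"

definition tv :: "nat \<Rightarrow> (nat \<Rightarrow> nat \<Rightarrow> complex) \<Rightarrow> real" where
  "tv N X = (\<Sum>j<N - 1. \<Sum>k<N. cmod (X (j+1) k - X j k))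
          + (\<Sum>j<N. \<Sum>k<N - 1. cmod (X j (k+1) - X j k))"

definition lin_on_mats :: "nat \<Rightarrow> ((nat \<Rightarrow> nat \<Rightarrow> complex) \<Rightarrow> (nat \<Rightarrow> complex)) \<Rightarrow> bool" where
  "lin_on_mats N B \<longleftrightarrow>
     (\<forall>X\<in>mats N. \<forall>Y\<in>mats N. B (\<lambda>j k. X j k + Y j k) = (\<lambda>i. B X i + B Y i)) \<and>
     (\<forall>X\<in>mats N. \<forall>c. B (\<lambda>j k. c * X j k) = (\<lambda>i. c * B X i))"

definition rip :: "nat \<Rightarrow> nat \<Rightarrow> ((nat \<Rightarrow> nat \<Rightarrow> complex) \<Rightarrow> (nat \<Rightarrow> complex)) \<Rightarrow> nat \<Rightarrow> real \<Rightarrow> bool" where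
  "rip N m A s \<delta> \<longleftrightarrow>
     (\<forall>X\<in>mats N. card {(j,k). j < N \<and> k < N \<and> X j k \<noteq> 0} \<le> s \<longrightarrow>
        (1 - \<delta>) * (fro N X)\<^sup>2 \<le> (vnorm m (A X))\<^sup>2 \<and>
        (vnorm m (A X))\<^sup>2 \<le> (1 + \<delta>) * (fro N X)\<^sup>2)"

text \<open>Univariate Haar functions: H^0 (False) and H^1 (True).\<close>
definition haar1 :: "bool \<Rightarrow> real \<Rightarrow> real" where
  "haar1 e t = (if \<not> e then (if 0 \<le> t \<and> t < 1 then 1 else 0)
               else (if 0 \<le> t \<and> t < 1/2 then 1 else if 1/2 \<le> t \<and> t < 1 then -1 else 0))"

definition haar2 :: "bool \<Rightarrow> bool \<Rightarrow> nat \<Rightarrow> nat \<Rightarrow> nat \<Rightarrow> real \<Rightarrow> real \<Rightarrow> real" where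
  "haar2 e1 e2 l q1 q2 u v =
     2 ^ l * haar1 e1 (2 ^ l * u - real q1) * haar1 e2 (2 ^ l * v - real q2)"

definition haar_level :: "nat \<Rightarrow> nat \<Rightarrow> nat" where
  "haar_level j k = (LEAST l. max j k < 2 ^ Suc l)"

text \<open>Basis element placed at array position (j,k), 0 <= j,k < N = 2^n, viewed as an
  N x N matrix via the isometric identification (entry (a,b) = value on the cell
  [a/N,(a+1)/N) x [b/N,(b+1)/N) divided by N). Position (0,0) holds the constant
  function; position (j,k) with 2^l <= max j k < 2^(l+1) holds H^e_{l,q} with
  e = (j >= 2^l, k >= 2^l), q = (j mod 2^l, k mod 2^l).\<close>
definition haar_basis :: "nat \<Rightarrow> nat \<Rightarrow> nat \<Rightarrow> nat \<Rightarrow> nat \<Rightarrow> complex" where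
  "haar_basis n j k a b =
     (let N = (2::nat) ^ n in
      if N \<le> a \<or> N \<le> b then 0
      else if j = 0 \<and> k = 0 then complex_of_real (1 / real N)
      else (let l = haar_level j k in
            complex_of_real (haar2 (2 ^ l \<le> j) (2 ^ l \<le> k) l (j mod 2 ^ l) (k mod 2 ^ l)
                               (real a / real N) (real b / real N) / real N)))"

definition haar :: "nat \<Rightarrow> (nat \<Rightarrow> nat \<Rightarrow> complex) \<Rightarrow> (nat \<Rightarrow> nat \<Rightarrow> complex)" where
  "haar n X = (\<lambda>j k. if j < 2 ^ n \<and> k < 2 ^ n then
       (\<Sum>a<2 ^ n. \<Sum>b<2 ^ n. X a b * cnj (haar_basis n j k a b)) else 0)"

definition haar_inv :: "nat \<Rightarrow> (nat \<Rightarrow> nat \<Rightarrow> complex) \<Rightarrow> (nat \<Rightarrow> nat \<Rightarrow> complex)" where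
  "haar_inv n Y = (\<lambda>a b. \<Sum>j<2 ^ n. \<Sum>k<2 ^ n. Y j k * haar_basis n j k a b)"

end

theory Submission
  imports Defs
begin


definition n1 :: "('i \<Rightarrow> real) \<Rightarrow> 'i set \<Rightarrow> real" where "n1 w T = (\<Sum>p\<in>T. w p)"
definition n2 :: "('i \<Rightarrow> real) \<Rightarrow> 'i set \<Rightarrow> real" where "n2 w T = sqrt (\<Sum>p\<in>T. (w p)^2)"

lemma vnorm_add: "vnorm m (\<lambda>i. u i + v i) \<le> vnorm m u + vnorm m v"
proof -
  have "vnorm m (\<lambda>i. u i + v i) = L2_set (\<lambda>i. cmod (u i + v i)) {..<m}"
    by (simp add: vnorm_def L2_set_def)
  also have "\<dots> \<le> L2_set (\<lambda>i. cmod (u i) + cmod (v i)) {..<m}"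
    by (rule L2_set_mono) (auto simp: norm_triangle_ineq)
  also have "\<dots> \<le> L2_set (\<lambda>i. cmod (u i)) {..<m} + L2_set (\<lambda>i. cmod (v i)) {..<m}"
    by (rule L2_set_triangle_ineq)
  finally show ?thesis by (simp add: vnorm_def L2_set_def)
qed

lemma vnorm_nonneg: "vnorm m u \<ge> 0" by (simp add: vnorm_def sum_nonneg)

lemma top_set:
  fixes w :: "'i \<Rightarrow> real"
  assumes fin: "finite J" and sJ: "s \<le> card J" and s1: "s \<ge> 1" and wpos: "\<forall>p. w p \<ge> 0"
  shows "\<exists>S\<subseteq>J. card S = s \<and> (\<forall>p\<in>J-S. w p * s \<le> n1 w S) \<and>
           (\<forall>S'\<subseteq>J. card S' \<le> s \<longrightarrow> n1 w S' \<le> n1 w S)"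
proof -
  define F where "F = {S. S \<subseteq> J \<and> card S = s}"
  have finF: "finite F" using fin unfolding F_def by auto
  obtain S0 where "S0 \<subseteq> J" "card S0 = s" using obtain_subset_with_card_n[OF sJ] by metis
  hence neF: "F \<noteq> {}" unfolding F_def by auto
  define v where "v = Max (n1 w ` F)"
  have "v \<in> n1 w ` F" unfolding v_def using finF neF by (intro Max_in) auto
  then obtain S where SF: "S \<in> F" and Sv: "n1 w S = v" by auto
  have maxv: "\<And>S'. S' \<in> F \<Longrightarrow> n1 w S' \<le> v" unfolding v_def using finF by auto
  have SJ: "S \<subseteq> J" and cS: "card S = s" using SF unfolding F_def by auto
  have finS: "finite S" using SJ fin finite_subset by auto
  have exch: "w p \<le> w q" if p: "p \<in> J - S" and q: "q \<in> S" for p q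
  proof -
    define S' where "S' = insert p (S - {q})"
    have "card S' = s" unfolding S'_def using p q finS cS
      by (simp add: card_insert_if) (metis One_nat_def Suc_pred card_gt_0_iff empty_iff q)
    moreover have "S' \<subseteq> J" unfolding S'_def using p q SJ by auto
    ultimately have "n1 w S' \<le> v" using maxv unfolding F_def by auto
    moreover have "n1 w S' = n1 w S - w q + w p" unfolding S'_def n1_def using p q finS
      by (simp add: sum_diff1)
    ultimately show ?thesis using Sv by simp
  qed
  have A: "\<forall>p\<in>J-S. w p * s \<le> n1 w S"
  proof
    fix p assume p: "p \<in> J - S"
    have "w p * s = (\<Sum>q\<in>S. w p)" using cS by simp
    also have "\<dots> \<le> (\<Sum>q\<in>S. w q)" using exch[OF p] by (intro sum_mono) auto
    finally show "w p * s \<le> n1 w S" by (simp add: n1_def)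
  qed
  have B: "\<forall>S'\<subseteq>J. card S' \<le> s \<longrightarrow> n1 w S' \<le> n1 w S" 
  proof (intro allI impI)
    fix S' assume S'J: "S' \<subseteq> J" and cS': "card S' \<le> s"
    have finS': "finite S'" using S'J fin finite_subset by auto
    have "s - card S' \<le> card (J - S')" using sJ card_Diff_subset[OF finS' S'J] cS' card_mono[OF fin S'J]
      by simp
    then obtain X where X: "X \<subseteq> J - S'" "card X = s - card S'" "finite X"
      using obtain_subset_with_card_n by metis
    have "card (S' \<union> X) = s" using X finS' cS' by (subst card_Un_disjoint) auto
    hence "S' \<union> X \<in> F" unfolding F_def using X S'J by auto
    hence "n1 w (S' \<union> X) \<le> v" by (rule maxv)
    moreover have "n1 w S' \<le> n1 w (S' \<union> X)" unfolding n1_def using X finS' wpos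
      by (intro sum_mono2) auto
    ultimately show "n1 w S' \<le> n1 w S" using Sv by simp
  qed
  show ?thesis using A B SJ cS by blast
qed

lemma sqrt_add_le: "a \<ge> 0 \<Longrightarrow> b \<ge> 0 \<Longrightarrow> sqrt (a + b) \<le> sqrt a + sqrt b"
  by (metis add_nonneg_nonneg real_le_rsqrt real_sqrt_ge_zero sqrt_add_le_add_sqrt)

lemma n2_union: "finite T \<Longrightarrow> finite U \<Longrightarrow> T \<inter> U = {} \<Longrightarrow> n2 w (T \<union> U) \<le> n2 w T + n2 w U"
  unfolding n2_def by (simp add: sum.union_disjoint sqrt_add_le sum_nonneg)

lemma n2_bound: assumes "finite J" "\<forall>p\<in>J. w p \<le> t" "\<forall>p. w p \<ge> 0" "card J \<le> s" "t \<ge> 0"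
  shows "n2 w J \<le> sqrt s * t"
proof -
  have t0: "t \<ge> 0" using assms by simp
  have "(\<Sum>p\<in>J. (w p)^2) \<le> (\<Sum>p\<in>J. t^2)" using assms by (intro sum_mono power_mono) auto
  also have "\<dots> = card J * t^2" by simp
  also have "\<dots> \<le> s * t^2" using assms by (simp add: mult_right_mono)
  finally have "n2 w J \<le> sqrt (s * t^2)" unfolding n2_def by simp
  also have "\<dots> = sqrt s * t" using t0 by (simp add: real_sqrt_mult)
  finally show ?thesis .
qed

lemma block:
  fixes w :: "'i \<Rightarrow> real" and A :: "'i set \<Rightarrow> nat \<Rightarrow> complex"
  assumes finI: "finite I"
    and add: "\<And>T U. T \<subseteq> I \<Longrightarrow> U \<subseteq> I \<Longrightarrow> T \<inter> U = {} \<Longrightarrow> A (T \<union> U) = (\<lambda>i. A T i + A U i)"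
    and up: "\<And>T. T \<subseteq> I \<Longrightarrow> card T \<le> 2 * s \<Longrightarrow> vnorm m (A T) \<le> r1 * n2 w T"
    and s1: "s \<ge> 1" and wpos: "\<forall>p. w p \<ge> 0" and r1: "r1 \<ge> 0"
  shows "J \<subseteq> I \<Longrightarrow> \<forall>p\<in>J. w p \<le> t \<Longrightarrow> t \<ge> 0 \<Longrightarrow>
     vnorm m (A J) \<le> r1 * (sqrt s * t + n1 w J / sqrt s) \<and> n2 w J \<le> sqrt s * t + n1 w J / sqrt s"
proof (induction "card J" arbitrary: J t rule: less_induct)
  case less
  have finJ: "finite J" using less.prems finI finite_subset by auto
  have n1J: "n1 w J \<ge> 0" unfolding n1_def using wpos by (simp add: sum_nonneg)
  have sq: "sqrt s > 0" using s1 by simp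
  show ?case
  proof (cases "card J \<le> s")
    case True
    have a: "n2 w J \<le> sqrt s * t" using n2_bound[OF finJ] less.prems wpos True by auto
    have b: "n2 w J \<le> sqrt s * t + n1 w J / sqrt s" using a n1J sq by (smt (verit) divide_nonneg_pos)
    have "vnorm m (A J) \<le> r1 * n2 w J" using up less.prems True by auto
    also have "\<dots> \<le> r1 * (sqrt s * t + n1 w J / sqrt s)" using b r1 by (simp add: mult_left_mono)
    finally show ?thesis using b by simp
  next
    case False
    then obtain S where SJ: "S \<subseteq> J" and cS: "card S = s"
        and dom: "\<forall>p\<in>J-S. w p * s \<le> n1 w S"
      using top_set[OF finJ _ s1 wpos] by (meson nat_le_linear)
    have finS: "finite S" using SJ finJ finite_subset by auto
    define t' where "t' = n1 w S / s"
    have t'0: "t' \<ge> 0" unfolding t'_def n1_def using wpos by (simp add: sum_nonneg)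
    have ent: "\<forall>p\<in>J-S. w p \<le> t'" unfolding t'_def using dom s1
      by (simp add: pos_le_divide_eq)
    have lt: "card (J - S) < card J" using card_Diff_subset[OF finS SJ] cS s1 False by simp
    have IH: "vnorm m (A (J-S)) \<le> r1 * (sqrt s * t' + n1 w (J-S) / sqrt s) \<and>
              n2 w (J-S) \<le> sqrt s * t' + n1 w (J-S) / sqrt s"
      using less.hyps[OF lt, of t'] less.prems ent t'0 by auto
    have Sb: "n2 w S \<le> sqrt s * t" using n2_bound[OF finS, of w t s] less.prems SJ wpos cS by auto
    have eq1: "sqrt s * t' = n1 w S / sqrt s" unfolding t'_def using sq
      by (simp add: field_simps)
    have n1split: "n1 w J = n1 w S + n1 w (J - S)" unfolding n1_def
      using finJ SJ sum.subset_diff[of S J w] by simp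
    have key: "sqrt s * t' + n1 w (J-S) / sqrt s = n1 w J / sqrt s"
      using eq1 n1split by (simp add: add_divide_distrib)
    have JU: "J = S \<union> (J - S)" using SJ by auto
    have "A J = (\<lambda>i. A S i + A (J-S) i)" using add[of S "J-S"] SJ less.prems JU by auto
    hence "vnorm m (A J) \<le> vnorm m (A S) + vnorm m (A (J-S))" using vnorm_add by metis
    also have "vnorm m (A S) \<le> r1 * n2 w S" using up SJ less.prems cS by auto
    also have "r1 * n2 w S \<le> r1 * (sqrt s * t)" using Sb r1 by (simp add: mult_left_mono)
    finally have v: "vnorm m (A J) \<le> r1 * (sqrt s * t + n1 w J / sqrt s)"
      using IH key by (simp add: distrib_left)
    have "n2 w J \<le> n2 w S + n2 w (J - S)" using n2_union[of S "J - S" w] finS finJ JU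
      by (metis Diff_disjoint finite_Diff)
    hence "n2 w J \<le> sqrt s * t + n1 w J / sqrt s" using IH Sb key by linarith
    with v show ?thesis by simp
  qed
qed

lemma rip_abstract:
  fixes w :: "'i \<Rightarrow> real" and A :: "'i set \<Rightarrow> nat \<Rightarrow> complex"
  assumes finI: "finite I"
    and add: "\<And>T U. T \<subseteq> I \<Longrightarrow> U \<subseteq> I \<Longrightarrow> T \<inter> U = {} \<Longrightarrow> A (T \<union> U) = (\<lambda>i. A T i + A U i)"
    and up: "\<And>T. T \<subseteq> I \<Longrightarrow> card T \<le> 2 * s \<Longrightarrow> vnorm m (A T) \<le> r1 * n2 w T"
    and lo: "\<And>T. T \<subseteq> I \<Longrightarrow> card T \<le> 2 * s \<Longrightarrow> r0 * n2 w T \<le> vnorm m (A T)"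
    and s1: "s \<ge> 1" and wpos: "\<forall>p. w p \<ge> 0" and r1: "r1 \<ge> 0" and r0: "r0 > 0"
    and cI: "2 * s \<le> card I" and SI: "S \<subseteq> I" and cS: "card S \<le> s"
  shows "n2 w I \<le> (vnorm m (A I) + r1 * (n1 w (I - S) / sqrt s)) / r0 + n1 w (I - S) / sqrt s"
proof -
  have sq: "sqrt s > 0" using s1 by simp
  obtain T0 where T0I: "T0 \<subseteq> I" and c0: "card T0 = s" and dom0: "\<forall>S'\<subseteq>I. card S' \<le> s \<longrightarrow> n1 w S' \<le> n1 w T0"
  proof -
    have "s \<le> card I" using cI by simp
    thus ?thesis using top_set[OF finI _ s1 wpos] that by blast
  qed
  have fin0: "finite T0" using T0I finI finite_subset by auto
  have "s \<le> card (I - T0)" using card_Diff_subset[OF fin0 T0I] c0 cI by simp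
  then obtain T1 where T1I: "T1 \<subseteq> I - T0" and c1: "card T1 = s"
     and dom1: "\<forall>p\<in>(I-T0)-T1. w p * s \<le> n1 w T1"
    using top_set[OF _ _ s1 wpos, of "I - T0"] finI by blast
  have fin1: "finite T1" using T1I finI finite_subset by auto
  define U where "U = T0 \<union> T1"
  define J where "J = I - U"
  have UI: "U \<subseteq> I" unfolding U_def using T0I T1I by auto
  have cU: "card U \<le> 2 * s" unfolding U_def using c0 c1 card_Un_le[of T0 T1] by simp
  define t where "t = n1 w T1 / s"
  have t0: "t \<ge> 0" unfolding t_def n1_def using wpos by (simp add: sum_nonneg)
  have ent: "\<forall>p\<in>J. w p \<le> t" unfolding t_def J_def U_def using dom1 s1
      by (auto simp: pos_le_divide_eq)
  have JI: "J \<subseteq> I" unfolding J_def by auto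
  have B: "vnorm m (A J) \<le> r1 * (sqrt s * t + n1 w J / sqrt s) \<and> n2 w J \<le> sqrt s * t + n1 w J / sqrt s"
    using block[OF finI add up s1 wpos r1 JI ent t0] by blast
  have eq1: "sqrt s * t = n1 w T1 / sqrt s" unfolding t_def using sq
      by (simp add: field_simps)
  have IT: "I - T0 = T1 \<union> J" unfolding J_def U_def using T1I by auto
  have split: "n1 w (I - T0) = n1 w T1 + n1 w J" unfolding n1_def IT
    using fin1 finI by (intro sum.union_disjoint) (auto simp: J_def U_def)
  define \<sigma> where "\<sigma> = n1 w (I - T0) / sqrt s"
  have key: "sqrt s * t + n1 w J / sqrt s = \<sigma>" unfolding \<sigma>_def using eq1 split by (simp add: add_divide_distrib)
  have sig: "\<sigma> \<le> n1 w (I - S) / sqrt s"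
  proof -
    have "n1 w I = n1 w T0 + n1 w (I - T0)" "n1 w I = n1 w S + n1 w (I - S)"
      unfolding n1_def using finI T0I SI sum.subset_diff[of T0 I w] sum.subset_diff[of S I w] by simp_all
    moreover have "n1 w S \<le> n1 w T0" using dom0 SI cS by auto
    ultimately have "n1 w (I - T0) \<le> n1 w (I - S)" by linarith
    thus ?thesis unfolding \<sigma>_def using sq by (simp add: divide_right_mono)
  qed
  have IU: "I = U \<union> J" unfolding J_def using UI by auto
  have "A (U \<union> J) = (\<lambda>i. A U i + A J i)" using UI JI by (intro add) (auto simp: J_def)
  hence AI: "A I = (\<lambda>i. A U i + A J i)" by (simp add: IU[symmetric])
  have "vnorm m (A U) \<le> vnorm m (A I) + vnorm m (A J)"
  proof -
    have "A U = (\<lambda>i. A I i + (- A J i))" using AI by auto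
    hence "vnorm m (A U) \<le> vnorm m (A I) + vnorm m (\<lambda>i. - A J i)" using vnorm_add by metis
    moreover have "vnorm m (\<lambda>i. - A J i) = vnorm m (A J)" by (simp add: vnorm_def)
    ultimately show ?thesis by simp
  qed
  moreover have "vnorm m (A J) \<le> r1 * \<sigma>" using B key by simp
  ultimately have "r0 * n2 w U \<le> vnorm m (A I) + r1 * \<sigma>" using lo[OF UI cU] by linarith
  hence nU: "n2 w U \<le> (vnorm m (A I) + r1 * \<sigma>) / r0" using r0 by (simp add: pos_le_divide_eq mult.commute)
  have finU: "finite U" using UI finI finite_subset by auto
  have "n2 w (U \<union> J) \<le> n2 w U + n2 w J" using finU finI by (intro n2_union) (auto simp: J_def)
  hence "n2 w I \<le> n2 w U + n2 w J" by (simp add: IU[symmetric])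
  hence "n2 w I \<le> (vnorm m (A I) + r1 * \<sigma>) / r0 + \<sigma>" using nU B key by linarith
  also have "\<dots> \<le> (vnorm m (A I) + r1 * (n1 w (I - S) / sqrt s)) / r0 + n1 w (I - S) / sqrt s"
  proof -
    have "r1 * \<sigma> \<le> r1 * (n1 w (I - S) / sqrt s)" using sig r1 by (rule mult_left_mono)
    hence "(vnorm m (A I) + r1 * \<sigma>) / r0 \<le> (vnorm m (A I) + r1 * (n1 w (I - S) / sqrt s)) / r0"
      using r0 by (simp add: divide_right_mono)
    thus ?thesis using sig by linarith
  qed
  finally show ?thesis .
qed


lemma div_eq_iff_nat: "(K::nat) > 0 \<Longrightarrow> a div K = q \<longleftrightarrow> q * K \<le> a \<and> a < (q+1) * K"
  by (metis div_less_iff_less_mult le_antisym less_add_one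
    less_eq_div_iff_mult_less_eq less_inc_imp_less_eq)

lemma mod_lt_iff: "a div (2*K) = (q::nat) \<Longrightarrow> a mod (2*K) < K \<longleftrightarrow> a < (2*q+1)*K"
proof -
  assume h: "a div (2*K) = q"
  have e0: "a = (a div (2*K))*(2*K) + a mod (2*K)" by (rule div_mult_mod_eq[symmetric])
  have g: "q*(2*K) = 2*q*K" by simp
  have e: "a = 2*q*K + a mod (2*K)" using e0 h g by simp
  have f: "(2*q+1)*K = 2*q*K + K" by (simp add: algebra_simps)
  show ?thesis using e f by linarith
qed

lemma hh_F: assumes "(K::nat) > 0"
  shows "haar1 False (real a / real K - real q) = (if a div K = q then 1 else 0)"
proof -
  have Kp: "real K > 0" using assms by simp
  have 1: "0 \<le> real a / real K - real q \<longleftrightarrow> q * K \<le> a"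
  proof -
    have "0 \<le> real a / real K - real q \<longleftrightarrow> real q * real K \<le> real a" using Kp by (simp add: field_simps)
    also have "\<dots> \<longleftrightarrow> real (q * K) \<le> real a" by simp
    also have "\<dots> \<longleftrightarrow> q * K \<le> a" by (rule of_nat_le_iff)
    finally show ?thesis .
  qed
  have 2: "real a / real K - real q < 1 \<longleftrightarrow> a < (q+1) * K"
  proof -
    have "real a / real K - real q < 1 \<longleftrightarrow> real a < (real q + 1) * real K" using Kp by (simp add: field_simps)
    also have "\<dots> \<longleftrightarrow> real a < real ((q+1) * K)" by (simp add: algebra_simps)
    also have "\<dots> \<longleftrightarrow> a < (q+1) * K" by (rule of_nat_less_iff)
    finally show ?thesis .
  qed
  have "(0 \<le> real a / real K - real q \<and> real a / real K - real q < 1) = (a div K = q)"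
    using 1 2 div_eq_iff_nat[OF assms] by blast
  thus ?thesis by (simp add: haar1_def)
qed

lemma hh_T: assumes "(K::nat) > 0"
  shows "haar1 True (real a / real (2*K) - real q) =
    (if a div (2*K) = q then (if a mod (2*K) < K then 1 else -1) else 0)"
proof -
  have Kp: "real K > 0" using assms by simp
  have 1: "0 \<le> real a / real (2*K) - real q \<longleftrightarrow> 2*q * K \<le> a"
  proof -
    have "0 \<le> real a / real (2*K) - real q \<longleftrightarrow> real (2*q*K) \<le> real a" using Kp by (simp add: field_simps)
    also have "\<dots> \<longleftrightarrow> 2*q * K \<le> a" by (rule of_nat_le_iff)
    finally show ?thesis .
  qed
  have 2: "real a / real (2*K) - real q < 1/2 \<longleftrightarrow> a < (2*q+1) * K"
  proof -
    have "real a / real (2*K) - real q < 1/2 \<longleftrightarrow> real a / real (2*K) < real q + 1/2" by linarith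
    also have "\<dots> \<longleftrightarrow> real a < (real q + 1/2) * real (2*K)" using Kp by (simp add: pos_divide_less_eq)
    also have "(real q + 1/2) * real (2*K) = real ((2*q+1) * K)" by (simp add: algebra_simps)
    also have "real a < real ((2*q+1) * K) \<longleftrightarrow> a < (2*q+1) * K" by (rule of_nat_less_iff)
    finally show ?thesis .
  qed
  have 3: "real a / real (2*K) - real q < 1 \<longleftrightarrow> a < (2*q+2) * K"
  proof -
    have "real a / real (2*K) - real q < 1 \<longleftrightarrow> real a < real ((2*q+2) * K)" using Kp by (simp add: field_simps)
    also have "\<dots> \<longleftrightarrow> a < (2*q+2) * K" by (rule of_nat_less_iff)
    finally show ?thesis .
  qed
  have 4: "1/2 \<le> real a / real (2*K) - real q \<longleftrightarrow> (2*q+1) * K \<le> a" using 2 by linarith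
  have D: "a div (2*K) = q \<longleftrightarrow> 2*q*K \<le> a \<and> a < (2*q+2)*K"
    using div_eq_iff_nat[of "2*K" a q] assms by (simp add: algebra_simps)
  have M: "a div (2*K) = q \<Longrightarrow> a mod (2*K) < K \<longleftrightarrow> a < (2*q+1)*K" by (rule mod_lt_iff)
  have c1: "(0 \<le> real a / real (2*K) - real q \<and> real a / real (2*K) - real q < 1/2) =
      (a div (2*K) = q \<and> a mod (2*K) < K)"
  proof -
    have mono: "(2*q+1)*K \<le> (2*q+2)*K" by simp
    have "(0 \<le> real a / real (2*K) - real q \<and> real a / real (2*K) - real q < 1/2) =
       (2*q*K \<le> a \<and> a < (2*q+1)*K)" using 1 2 by simp
    also have "\<dots> = (a div (2*K) = q \<and> a mod (2*K) < K)"
    proof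
      assume h: "2*q*K \<le> a \<and> a < (2*q+1)*K"
      hence "a < (2*q+2)*K" using mono by linarith
      hence dq: "a div (2*K) = q" using D h by blast
      thus "a div (2*K) = q \<and> a mod (2*K) < K" using M h by blast
    next
      assume h: "a div (2*K) = q \<and> a mod (2*K) < K"
      thus "2*q*K \<le> a \<and> a < (2*q+1)*K" using D M by blast
    qed
    finally show ?thesis .
  qed
  have c2: "(1/2 \<le> real a / real (2*K) - real q \<and> real a / real (2*K) - real q < 1) =
      (a div (2*K) = q \<and> \<not> a mod (2*K) < K)"
  proof -
    have mono: "2*q*K \<le> (2*q+1)*K" by simp
    have "(1/2 \<le> real a / real (2*K) - real q \<and> real a / real (2*K) - real q < 1) =
       ((2*q+1)*K \<le> a \<and> a < (2*q+2)*K)" using 3 4 by simp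
    also have "\<dots> = (a div (2*K) = q \<and> \<not> a mod (2*K) < K)"
    proof
      assume h: "(2*q+1)*K \<le> a \<and> a < (2*q+2)*K"
      hence "2*q*K \<le> a" using mono by linarith
      hence dq: "a div (2*K) = q" using D h by blast
      thus "a div (2*K) = q \<and> \<not> a mod (2*K) < K" using M h by simp
    next
      assume h: "a div (2*K) = q \<and> \<not> a mod (2*K) < K"
      thus "(2*q+1)*K \<le> a \<and> a < (2*q+2)*K" using D M by simp
    qed
    finally show ?thesis .
  qed
  show ?thesis using c1 c2 by (simp add: haar1_def)
qed


definition hbr :: "nat \<Rightarrow> nat \<Rightarrow> nat \<Rightarrow> nat \<Rightarrow> nat \<Rightarrow> real" where
  "hbr n j k a b =
     (if 2 ^ n \<le> a \<or> 2 ^ n \<le> b then 0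
      else if j = 0 \<and> k = 0 then 1 / real ((2::nat) ^ n)
      else haar2 (2 ^ haar_level j k \<le> j) (2 ^ haar_level j k \<le> k) (haar_level j k)
              (j mod 2 ^ haar_level j k) (k mod 2 ^ haar_level j k)
              (real a / real ((2::nat) ^ n)) (real b / real ((2::nat) ^ n)) / real ((2::nat) ^ n))"

lemma hb_real: "haar_basis n j k a b = complex_of_real (hbr n j k a b)"
  unfolding haar_basis_def hbr_def Let_def by simp

definition pos :: "bool \<Rightarrow> nat \<Rightarrow> nat \<Rightarrow> nat" where
  "pos e l q = (if e then 2 ^ l else 0) + q"

lemma haar_level_eq:
  assumes "q1 < 2 ^ l" "q2 < 2 ^ l" "e1 \<or> e2"
  shows "haar_level (pos e1 l q1) (pos e2 l q2) = l"
proof -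
  let ?m = "max (pos e1 l q1) (pos e2 l q2)"
  have lo: "2 ^ l \<le> ?m" using assms unfolding pos_def by auto
  have hi: "?m < 2 ^ Suc l" using assms unfolding pos_def by auto
  show ?thesis unfolding haar_level_def
  proof (rule Least_equality)
    show "?m < 2 ^ Suc l" by (rule hi)
    fix y assume "?m < 2 ^ Suc y"
    hence "(2::nat) ^ l < 2 ^ Suc y" using lo by linarith
    hence "l < Suc y" using power_less_imp_less_exp by (metis one_less_numeral_iff semiring_norm(76))
    thus "l \<le> y" by simp
  qed
qed

lemma pos_props: "q < 2 ^ l \<Longrightarrow> (2 ^ l \<le> pos e l q) = e \<and> pos e l q mod 2 ^ l = q"
  unfolding pos_def by auto

lemma scale: "l \<le> n \<Longrightarrow> 2 ^ l * (real a / real ((2::nat) ^ n)) = real a / real ((2::nat) ^ (n - l))"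
proof -
  assume "l \<le> n"
  hence "(2::real) ^ n = 2 ^ l * 2 ^ (n - l)" by (metis le_add_diff_inverse power_add)
  thus ?thesis by simp
qed

lemma hbr_level:
  assumes "l < n" "q1 < 2 ^ l" "q2 < 2 ^ l" "e1 \<or> e2" "a < 2 ^ n" "b < 2 ^ n"
  shows "hbr n (pos e1 l q1) (pos e2 l q2) a b =
     2 ^ l / 2 ^ n * haar1 e1 (real a / real ((2::nat) ^ (n - l)) - real q1)
                   * haar1 e2 (real b / real ((2::nat) ^ (n - l)) - real q2)"
proof -
  have nz: "(pos e1 l q1 = 0 \<and> pos e2 l q2 = 0) = False" using assms(4) unfolding pos_def by auto
  have lv: "haar_level (pos e1 l q1) (pos e2 l q2) = l" using haar_level_eq assms by blast
  show ?thesis unfolding hbr_def using assms nz lv pos_props[OF assms(2), of e1] pos_props[OF assms(3), of e2]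
      scale[of l n a] scale[of l n b]
    by (auto simp add: haar2_def)
qed

lemma hbr00: "a < 2 ^ n \<Longrightarrow> b < 2 ^ n \<Longrightarrow> hbr n 0 0 a b = 1 / 2 ^ n"
  unfolding hbr_def by simp

lemma hbr_out: "\<not> (a < 2 ^ n \<and> b < 2 ^ n) \<Longrightarrow> hbr n j k a b = 0"
  unfolding hbr_def by auto

lemma sum_lt_add: "(\<Sum>j<(m::nat)+m'. f j) = (\<Sum>j<m. f j) + (\<Sum>q<m'. f (m+q))"
  by (induction m') (simp_all add: add.assoc)

lemma sum_split2: "(\<Sum>j<2 ^ Suc l. f j) = (\<Sum>q<2 ^ l. f (pos False l q)) + (\<Sum>q<2 ^ l. f (pos True l q))"
  unfolding pos_def using sum_lt_add[of f "2^l" "2^l"] by (simp add: mult_2)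

lemma sum_split22: "(\<Sum>j<2 ^ Suc l. \<Sum>k<2 ^ Suc l. f j k) = (\<Sum>j<2 ^ l. \<Sum>k<2 ^ l. f j k)
   + (\<Sum>q1<2 ^ l. \<Sum>q2<2 ^ l. f (pos False l q1) (pos True l q2))
   + (\<Sum>q1<2 ^ l. \<Sum>q2<2 ^ l. f (pos True l q1) (pos False l q2))
   + (\<Sum>q1<2 ^ l. \<Sum>q2<2 ^ l. f (pos True l q1) (pos True l q2))"
proof -
  have p0: "pos False l q = q" for q unfolding pos_def by simp
  show ?thesis unfolding sum_split2[of _ l] by (simp add: sum.distrib p0 add.assoc)
qed


definition G :: "bool \<Rightarrow> nat \<Rightarrow> nat \<Rightarrow> nat \<Rightarrow> nat \<Rightarrow> real" where
  "G e K L x x' = (\<Sum>q<2^L. haar1 e (real x / real K - real q) * haar1 e (real x' / real K - real q))"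

lemma four_pow: "(4::real) ^ L = 2 ^ L * 2 ^ L"
  by (simp add: power_mult_distrib[symmetric])

lemma G_F: assumes "K > 0" "x div K < 2^L" "x' div K < 2^L"
  shows "G False K L x x' = (if x div K = x' div K then 1 else 0)"
proof -
  have "G False K L x x' = (\<Sum>q<2^L. if q = x div K then (if x' div K = q then 1 else 0) else 0)"
    unfolding G_def hh_F[OF assms(1)] by (intro sum.cong refl) auto
  also have "\<dots> = (if x div K = x' div K then 1 else 0)" using assms(2) by (simp add: sum.delta)
  finally show ?thesis .
qed

lemma G_T: assumes "K > 0" "x div (2*K) < 2^L" "x' div (2*K) < 2^L"
  shows "G True (2*K) L x x' = (if x div (2*K) = x' div (2*K) then
     (if (x mod (2*K) < K) = (x' mod (2*K) < K) then 1 else -1) else 0)"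
proof -
  have "G True (2*K) L x x' = (\<Sum>q<2^L. if q = x div (2*K) then
      (if x' div (2*K) = q then (if (x mod (2*K) < K) = (x' mod (2*K) < K) then 1 else -1) else 0) else 0)"
    unfolding G_def hh_T[OF assms(1)] by (intro sum.cong refl) auto
  also have "\<dots> = (if x div (2*K) = x' div (2*K) then
     (if (x mod (2*K) < K) = (x' mod (2*K) < K) then 1 else -1) else 0)" using assms(2) by (simp add: sum.delta)
  finally show ?thesis .
qed

lemma div_split_eq: assumes "(K::nat) > 0"
  shows "(x div (2*K) = x' div (2*K) \<and> (x mod (2*K) < K) = (x' mod (2*K) < K)) \<longleftrightarrow> x div K = x' div K"
proof -
  have d: "z div (2*K) = z div K div 2" for z by (metis div_mult2_eq mult.commute)
  have m: "(z mod (2*K) < K) = (z div K mod 2 = 0)" for z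
  proof -
    have "z mod (K*2) = K * (z div K mod 2) + z mod K" by (rule mod_mult2_eq)
    moreover have "z mod K < K" using assms by simp
    moreover have "z div K mod 2 = 0 \<or> z div K mod 2 = 1"
    proof -
      have "z div K mod 2 < 2" by simp
      thus ?thesis by linarith
    qed
    ultimately show ?thesis
    proof (elim disjE)
      assume "z mod (K*2) = K * (z div K mod 2) + z mod K" "z mod K < K" "z div K mod 2 = 0"
      thus ?thesis by (simp add: mult.commute)
    next
      assume "z mod (K*2) = K * (z div K mod 2) + z mod K" "z mod K < K" "z div K mod 2 = 1"
      thus ?thesis by (simp add: mult.commute)
    qed
  qed
  have e: "(y div 2 = y' div 2 \<and> (y mod 2 = 0) = (y' mod 2 = 0)) \<longleftrightarrow> y = (y'::nat)" for y y'
  proof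
    assume h: "y div 2 = y' div 2 \<and> (y mod 2 = 0) = (y' mod 2 = 0)"
    have "y mod 2 = y' mod 2"
    proof (cases "y mod 2 = 0")
      case True thus ?thesis using h by simp
    next
      case False
      hence "y mod 2 = 1" "y' mod 2 = 1" using h by (simp_all add: mod2_eq_if split: if_splits)
      thus ?thesis by simp
    qed
    moreover have "y = y div 2 * 2 + y mod 2" "y' = y' div 2 * 2 + y' mod 2" by simp_all
    ultimately show "y = y'" using h by metis
  qed simp
  show ?thesis unfolding d m by (rule e)
qed

lemma G_sum: assumes "K > 0" "x div (2*K) < 2^L" "x' div (2*K) < 2^L"
  shows "G False (2*K) L x x' + G True (2*K) L x x' = 2 * (if x div K = x' div K then 1 else 0)"
proof -
  have "2*K > 0" using assms by simp
  have A: "G False (2*K) L x x' = (if x div (2*K) = x' div (2*K) then 1 else 0)" by (rule G_F[OF \<open>2*K>0\<close> assms(2,3)])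
  have B: "G True (2*K) L x x' = (if x div (2*K) = x' div (2*K) then
     (if (x mod (2*K) < K) = (x' mod (2*K) < K) then 1 else -1) else 0)" by (rule G_T[OF assms])
  have C: "(x div (2*K) = x' div (2*K) \<and> (x mod (2*K) < K) = (x' mod (2*K) < K)) \<longleftrightarrow> x div K = x' div K"
    by (rule div_split_eq[OF assms(1)])
  show ?thesis
  proof (cases "x div (2*K) = x' div (2*K)")
    case True thus ?thesis using A B C by (cases "(x mod (2*K) < K) = (x' mod (2*K) < K)") simp_all
  next
    case False thus ?thesis using A B C by simp
  qed
qed

lemma piece:
  assumes "L < n" "e1 \<or> e2" "a < 2^n" "b < 2^n" "a' < 2^n" "b' < 2^n"
  shows "(\<Sum>q1<2^L. \<Sum>q2<2^L. hbr n (pos e1 L q1) (pos e2 L q2) a b * hbr n (pos e1 L q1) (pos e2 L q2) a' b')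
     = 4^L/4^n * G e1 (2^(n-L)) L a a' * G e2 (2^(n-L)) L b b'"
proof -
  let ?h = "\<lambda>e x q. haar1 e (real x / real ((2::nat) ^ (n - L)) - real q)"
  have "(\<Sum>q1<2^L. \<Sum>q2<2^L. hbr n (pos e1 L q1) (pos e2 L q2) a b * hbr n (pos e1 L q1) (pos e2 L q2) a' b')
     = (\<Sum>q1<2^L. \<Sum>q2<2^L. 4^L/4^n * (?h e1 a q1 * ?h e1 a' q1) * (?h e2 b q2 * ?h e2 b' q2))"
  proof (intro sum.cong refl)
    fix q1 q2 :: nat assume "q1 \<in> {..<2^L}" "q2 \<in> {..<2^L}"
    thus "hbr n (pos e1 L q1) (pos e2 L q2) a b * hbr n (pos e1 L q1) (pos e2 L q2) a' b' =
       4^L/4^n * (?h e1 a q1 * ?h e1 a' q1) * (?h e2 b q2 * ?h e2 b' q2)"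
      using assms by (simp add: hbr_level four_pow)
  qed
  also have "\<dots> = 4^L/4^n * (\<Sum>q1<2^L. \<Sum>q2<2^L. (?h e1 a q1 * ?h e1 a' q1) * (?h e2 b q2 * ?h e2 b' q2))"
    by (simp add: sum_distrib_left mult.assoc)
  also have "(\<Sum>q1<2^L. \<Sum>q2<2^L. (?h e1 a q1 * ?h e1 a' q1) * (?h e2 b q2 * ?h e2 b' q2)) =
     (\<Sum>q1<2^L. ?h e1 a q1 * ?h e1 a' q1) * (\<Sum>q2<2^L. ?h e2 b q2 * ?h e2 b' q2)"
    by (rule sum_product[symmetric])
  finally show ?thesis unfolding G_def by (simp add: mult.assoc)
qed


lemma pow_split: "L < n \<Longrightarrow> (2::nat) ^ (n - L) = 2 * 2 ^ (n - Suc L)"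
proof -
  assume "L < n"
  hence "n - L = Suc (n - Suc L)" by simp
  thus ?thesis by simp
qed

lemma div_lt_pow: "x < 2 ^ n \<Longrightarrow> L \<le> n \<Longrightarrow> x div 2 ^ (n - L) < (2::nat) ^ L"
proof -
  assume "x < 2 ^ n" "L \<le> n"
  moreover have "(2::nat) ^ n = 2 ^ L * 2 ^ (n - L)" using \<open>L \<le> n\<close> by (simp add: power_add[symmetric])
  ultimately show ?thesis by (simp add: div_less_iff_less_mult)
qed

lemma kernel:
  assumes "a < 2^n" "b < 2^n" "a' < 2^n" "b' < 2^n"
  shows "L \<le> n \<Longrightarrow> (\<Sum>j<2^L. \<Sum>k<2^L. hbr n j k a b * hbr n j k a' b') =
    4^L/4^n * ((if a div 2^(n-L) = a' div 2^(n-L) then 1 else 0) * (if b div 2^(n-L) = b' div 2^(n-L) then 1 else 0))"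
proof (induction L)
  case 0
  have "a div 2^n = 0" "a' div 2^n = 0" "b div 2^n = 0" "b' div 2^n = 0" using assms by simp_all
  moreover have "(1/2^n) * (1/2^n) = (1/4^n :: real)" by (simp add: four_pow)
  ultimately show ?case using assms by (simp add: hbr00)
next
  case (Suc L)
  hence Ln: "L < n" by simp
  define K' :: nat where "K' = 2 ^ (n - Suc L)"
  have K'0: "K' > 0" unfolding K'_def by simp
  have KK: "(2::nat) ^ (n - L) = 2 * K'" unfolding K'_def using pow_split[OF Ln] .
  let ?K = "(2::nat) ^ (n - L)"
  have dl: "x div (2 * K') < 2 ^ L" if "x < 2^n" for x using div_lt_pow[OF that, of L] Ln KK by simp
  define gFa where "gFa = G False (2*K') L a a'"
  define gTa where "gTa = G True (2*K') L a a'"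
  define gFb where "gFb = G False (2*K') L b b'"
  define gTb where "gTb = G True (2*K') L b b'"
  have hFa: "gFa = (if a div (2*K') = a' div (2*K') then 1 else 0)" unfolding gFa_def
    using G_F[of "2*K'" a L a'] K'0 dl assms by simp
  have hFb: "gFb = (if b div (2*K') = b' div (2*K') then 1 else 0)" unfolding gFb_def
    using G_F[of "2*K'" b L b'] K'0 dl assms by simp
  have sa: "gFa + gTa = 2 * (if a div K' = a' div K' then 1 else 0)" unfolding gFa_def gTa_def
    using G_sum[OF K'0] dl assms by simp
  have sb: "gFb + gTb = 2 * (if b div K' = b' div K' then 1 else 0)" unfolding gFb_def gTb_def
    using G_sum[OF K'0] dl assms by simp
  let ?f = "\<lambda>j k. hbr n j k a b * hbr n j k a' b'"
  have "(\<Sum>j<2^Suc L. \<Sum>k<2^Suc L. ?f j k) = (\<Sum>j<2 ^ L. \<Sum>k<2 ^ L. ?f j k)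
   + (\<Sum>q1<2 ^ L. \<Sum>q2<2 ^ L. ?f (pos False L q1) (pos True L q2))
   + (\<Sum>q1<2 ^ L. \<Sum>q2<2 ^ L. ?f (pos True L q1) (pos False L q2))
   + (\<Sum>q1<2 ^ L. \<Sum>q2<2 ^ L. ?f (pos True L q1) (pos True L q2))" by (rule sum_split22)
  also have "(\<Sum>j<2 ^ L. \<Sum>k<2 ^ L. ?f j k) = 4^L/4^n * (gFa * gFb)"
    using Suc.IH Ln hFa hFb KK by simp
  also have "(\<Sum>q1<2 ^ L. \<Sum>q2<2 ^ L. ?f (pos False L q1) (pos True L q2)) = 4^L/4^n * gFa * gTb"
    unfolding gFa_def gTb_def using piece[OF Ln, of False True] assms KK by simp
  also have "(\<Sum>q1<2 ^ L. \<Sum>q2<2 ^ L. ?f (pos True L q1) (pos False L q2)) = 4^L/4^n * gTa * gFb"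
    unfolding gTa_def gFb_def using piece[OF Ln, of True False] assms KK by simp
  also have "(\<Sum>q1<2 ^ L. \<Sum>q2<2 ^ L. ?f (pos True L q1) (pos True L q2)) = 4^L/4^n * gTa * gTb"
    unfolding gTa_def gTb_def using piece[OF Ln, of True True] assms KK by simp
  also have "4^L/4^n * (gFa * gFb) + 4^L/4^n * gFa * gTb + 4^L/4^n * gTa * gFb + 4^L/4^n * gTa * gTb
      = 4^L/4^n * ((gFa + gTa) * (gFb + gTb))" by (simp add: algebra_simps add_divide_distrib)
  also have "\<dots> = 4^Suc L/4^n * ((if a div K' = a' div K' then 1 else 0) * (if b div K' = b' div K' then 1 else 0))"
    unfolding sa sb by simp
  finally show ?case unfolding K'_def by simp
qed

lemma kernel_full:
  assumes "a < 2^n" "b < 2^n" "a' < 2^n" "b' < 2^n"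
  shows "(\<Sum>j<2^n. \<Sum>k<2^n. hbr n j k a b * hbr n j k a' b') = (if a = a' \<and> b = b' then 1 else 0)"
  using kernel[OF assms, of n] by simp


definition hF :: "nat \<Rightarrow> nat \<Rightarrow> nat \<Rightarrow> real" where "hF K q x = (if x div K = q then 1 else 0)"
definition hT :: "nat \<Rightarrow> nat \<Rightarrow> nat \<Rightarrow> real" where
  "hT K' q x = (if x div (2*K') = q then (if x mod (2*K') < K' then 1 else -1) else 0)"

lemma tele: "cmod (f (x + d) - f x) \<le> (\<Sum>i\<in>{x..<x+d}. cmod (f (Suc i) - f (i::nat)))"
proof (induction d)
  case 0 thus ?case by simp
next
  case (Suc d)
  have "cmod (f (x + Suc d) - f x) \<le> cmod (f (Suc (x+d)) - f (x+d)) + cmod (f (x + d) - f x)"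
    using norm_triangle_ineq[of "f (Suc (x+d)) - f (x+d)" "f (x + d) - f x"] by simp
  also have "\<dots> \<le> cmod (f (Suc (x+d)) - f (x+d)) + (\<Sum>i\<in>{x..<x+d}. cmod (f (Suc i) - f i))"
    using Suc.IH by simp
  also have "\<dots> = (\<Sum>i\<in>{x..<x+Suc d}. cmod (f (Suc i) - f i))" by simp
  finally show ?case .
qed

lemma divmod_lin: "r < (K::nat) \<Longrightarrow> (q * K + r) div K = q \<and> (q * K + r) mod K = r"
  by simp

lemma oneD:
  fixes f :: "nat \<Rightarrow> complex"
  assumes K0: "K' > 0" and qN: "(q+1)*(2*K') \<le> N"
  shows "cmod (\<Sum>a<N. of_real (hT K' q a) * f a) \<le>
    real K' * (\<Sum>i<N-1. (if i div (2*K') = q then cmod (f (Suc i) - f i) else 0))"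
proof -
  define K where "K = 2*K'"
  have K0': "K > 0" using K0 unfolding K_def by simp
  define R where "R = N - q*K - 2*K'"
  have NN: "N = q*K + (K' + (K' + R))" using qN unfolding R_def K_def by (simp add: algebra_simps)
  define g where "g a = of_real (hT K' q a) * f a" for a
  have z1: "(\<Sum>a<q*K. g a) = 0"
  proof (intro sum.neutral ballI)
    fix a assume "a \<in> {..<q*K}"
    hence "a div K < q" using K0' by (simp add: div_less_iff_less_mult)
    thus "g a = 0" unfolding g_def hT_def K_def by simp
  qed
  have z2: "(\<Sum>r<R. g (q*K + (K' + (K' + r)))) = 0"
  proof (intro sum.neutral ballI)
    fix r assume "r \<in> {..<R}"
    have "q*K + (K' + (K' + r)) = (q+1)*K + r" unfolding K_def by (simp add: algebra_simps)
    hence "(q*K + (K' + (K' + r))) div K \<ge> q + 1" using K0' by (metis div_le_mono div_mult_self1_is_m le_add1 mult.commute)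
    thus "g (q*K + (K' + (K' + r))) = 0" unfolding g_def hT_def K_def by auto
  qed
  have p1: "g (q*K + r) = f (q*K + r)" if "r < K'" for r
  proof -
    have "r < K" using that unfolding K_def by simp
    hence "(q*K + r) div K = q \<and> (q*K + r) mod K = r" by (rule divmod_lin)
    thus ?thesis unfolding g_def hT_def K_def[symmetric] using that by simp
  qed
  have p2: "g (q*K + (K' + r)) = - f (q*K + (K' + r))" if "r < K'" for r
  proof -
    have "K' + r < K" using that unfolding K_def by simp
    hence "(q*K + (K' + r)) div K = q \<and> (q*K + (K' + r)) mod K = K' + r" by (rule divmod_lin)
    thus ?thesis unfolding g_def hT_def K_def[symmetric] using that by simp
  qed
  have "(\<Sum>a<N. g a) = (\<Sum>a<q*K. g a) + ((\<Sum>r<K'. g (q*K + r)) + ((\<Sum>r<K'. g (q*K + (K' + r)))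
       + (\<Sum>r<R. g (q*K + (K' + (K' + r))))))"
    unfolding NN by (simp add: sum_lt_add add.assoc)
  also have "\<dots> = (\<Sum>r<K'. f (q*K + r) - f (q*K + (K' + r)))"
    using z1 z2 p1 p2 by (simp add: sum_subtractf sum_negf)
  finally have eq: "(\<Sum>a<N. g a) = (\<Sum>r<K'. f (q*K + r) - f (q*K + (K' + r)))" .
  define W where "W = (\<Sum>i<N-1. (if i div K = q then cmod (f (Suc i) - f i) else 0))"
  have WW: "W = (\<Sum>i\<in>{i. i<N-1 \<and> i div K = q}. cmod (f (Suc i) - f i))"
    unfolding W_def by (simp add: sum.If_cases Collect_conj_eq lessThan_def Int_commute)
  have bnd: "cmod (f (q*K + r) - f (q*K + (K' + r))) \<le> W" if r: "r < K'" for r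
  proof -
    have "cmod (f (q*K + r) - f (q*K + (K' + r))) = cmod (f (q*K + r + K') - f (q*K + r))"
      by (simp add: norm_minus_commute add.assoc add.commute add.left_commute)
    also have "\<dots> \<le> (\<Sum>i\<in>{q*K+r..<q*K+r+K'}. cmod (f (Suc i) - f i))" by (rule tele)
    also have "\<dots> \<le> (\<Sum>i\<in>{i. i<N-1 \<and> i div K = q}. cmod (f (Suc i) - f i))"
    proof (rule sum_mono2)
      show "finite {i. i<N-1 \<and> i div K = q}" by simp
      show "{q*K+r..<q*K+r+K'} \<subseteq> {i. i<N-1 \<and> i div K = q}"
      proof
        fix i assume i: "i \<in> {q*K+r..<q*K+r+K'}"
        have a: "q*K \<le> i" "i < q*K + K - 1" using i r K0 unfolding K_def by auto
        hence "i < N - 1" using NN unfolding K_def by linarith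
        moreover have "i div K = q" using a div_eq_iff_nat[OF K0', of i q] by (simp add: algebra_simps)
        ultimately show "i \<in> {i. i<N-1 \<and> i div K = q}" by simp
      qed
    qed simp
    finally show ?thesis unfolding WW .
  qed
  have "cmod (\<Sum>a<N. g a) \<le> (\<Sum>r<K'. cmod (f (q*K + r) - f (q*K + (K' + r))))"
    unfolding eq by (rule norm_sum)
  also have "\<dots> \<le> (\<Sum>r<K'. W)" using bnd by (intro sum_mono) simp
  also have "\<dots> = real K' * W" by simp
  finally show ?thesis unfolding g_def W_def K_def .
qed


lemma sum_ind_le: "(\<Sum>q<(M::nat). (if x div K = q then (1::real) else 0)) \<le> 1"
proof -
  have "(\<Sum>q<M. (if x div K = q then (1::real) else 0)) = (\<Sum>q<M. (if q = x div K then 1 else 0))"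
    by (intro sum.cong) auto
  also have "\<dots> \<le> 1" by (subst sum.delta) auto
  finally show ?thesis .
qed

lemma sum_ind_le2: assumes "\<And>q. g q \<ge> (0::real)"
  shows "(\<Sum>q<(M::nat). (if x div K = q then g q else 0)) \<le> g (x div K)"
proof -
  have "(\<Sum>q<M. (if x div K = q then g q else 0)) = (\<Sum>q<M. (if q = x div K then g q else 0))"
    by (intro sum.cong) auto
  also have "\<dots> \<le> g (x div K)" using assms by (subst sum.delta) auto
  finally show ?thesis .
qed

lemma core:
  fixes D :: "nat \<Rightarrow> nat \<Rightarrow> complex" and g2 :: "nat \<Rightarrow> nat \<Rightarrow> real"
  assumes K0: "K' > 0" and NL: "2^L * (2*K') = N" and g2b: "\<And>q b. \<bar>g2 q b\<bar> \<le> hF (2*K') q b"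
  shows "(\<Sum>q1<2^L. \<Sum>q2<2^L. cmod (\<Sum>a<N. \<Sum>b<N. D a b * of_real (hT K' q1 a * g2 q2 b / real (2*K'))))
     \<le> 1/2 * (\<Sum>j<N-1. \<Sum>k<N. cmod (D (Suc j) k - D j k))"
proof -
  define K where "K = 2*K'"
  have Kpos: "real K > 0" using K0 unfolding K_def by simp
  define W where "W q1 b = (\<Sum>i<N-1. (if i div K = q1 then cmod (D (Suc i) b - D i b) else 0))" for q1 b
  have W0: "W q1 b \<ge> 0" for q1 b unfolding W_def by (intro sum_nonneg) auto
  have hF0: "hF K q b \<ge> 0" for q b unfolding hF_def by simp
  have one: "cmod (\<Sum>a<N. \<Sum>b<N. D a b * of_real (hT K' q1 a * g2 q2 b / real K))
      \<le> 1/2 * (\<Sum>b<N. hF K q2 b * W q1 b)" if q1: "q1 < 2^L" for q1 q2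
  proof -
    have qN: "(q1+1)*(2*K') \<le> N"
    proof -
      have "q1 + 1 \<le> 2^L" using q1 by simp
      hence "(q1+1)*(2*K') \<le> 2^L*(2*K')" by (rule mult_right_mono) simp
      thus ?thesis using NL by simp
    qed
    have "(\<Sum>a<N. \<Sum>b<N. D a b * of_real (hT K' q1 a * g2 q2 b / real K))
        = (\<Sum>b<N. \<Sum>a<N. of_real (g2 q2 b / real K) * (of_real (hT K' q1 a) * D a b))"
      by (subst sum.swap) (simp add: mult_ac)
    also have "\<dots> = (\<Sum>b<N. of_real (g2 q2 b / real K) * (\<Sum>a<N. of_real (hT K' q1 a) * D a b))"
      by (simp add: sum_distrib_left)
    finally have eq: "(\<Sum>a<N. \<Sum>b<N. D a b * of_real (hT K' q1 a * g2 q2 b / real K))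
        = (\<Sum>b<N. of_real (g2 q2 b / real K) * (\<Sum>a<N. of_real (hT K' q1 a) * D a b))" .
    have "cmod (\<Sum>b<N. of_real (g2 q2 b / real K) * (\<Sum>a<N. of_real (hT K' q1 a) * D a b))
        \<le> (\<Sum>b<N. cmod (of_real (g2 q2 b / real K) * (\<Sum>a<N. of_real (hT K' q1 a) * D a b)))"
      by (rule norm_sum)
    also have "\<dots> \<le> (\<Sum>b<N. hF K q2 b / real K * (real K' * W q1 b))"
    proof (rule sum_mono)
      fix b assume "b \<in> {..<N}"
      have o: "cmod (\<Sum>a<N. of_real (hT K' q1 a) * D a b) \<le> real K' * W q1 b"
        unfolding W_def K_def using oneD[OF K0 qN, of "\<lambda>a. D a b"] by simp
      have "cmod (of_real (g2 q2 b / real K) * (\<Sum>a<N. of_real (hT K' q1 a) * D a b))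
          = \<bar>g2 q2 b\<bar> / real K * cmod (\<Sum>a<N. of_real (hT K' q1 a) * D a b)"
        using Kpos by (simp add: norm_mult norm_divide)
      also have "\<dots> \<le> hF K q2 b / real K * (real K' * W q1 b)"
        using g2b[of q2 b] o Kpos unfolding K_def
        by (intro mult_mono divide_right_mono) auto
      finally show "cmod (of_real (g2 q2 b / real K) * (\<Sum>a<N. of_real (hT K' q1 a) * D a b))
          \<le> hF K q2 b / real K * (real K' * W q1 b)" .
    qed
    also have "\<dots> = 1/2 * (\<Sum>b<N. hF K q2 b * W q1 b)"
      unfolding K_def using K0 by (simp add: sum_distrib_left field_simps)
    finally show ?thesis using eq by simp
  qed
  have "(\<Sum>q1<2^L. \<Sum>q2<2^L. cmod (\<Sum>a<N. \<Sum>b<N. D a b * of_real (hT K' q1 a * g2 q2 b / real K)))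
      \<le> (\<Sum>q1<2^L. \<Sum>q2<2^L. 1/2 * (\<Sum>b<N. hF K q2 b * W q1 b))"
    using one by (intro sum_mono) auto
  also have "\<dots> = 1/2 * (\<Sum>b<N. (\<Sum>q2<2^L. hF K q2 b) * (\<Sum>q1<2^L. W q1 b))"
    by (simp add: sum_distrib_left sum_distrib_right sum.swap[of _ "{..<2^L}" "{..<N}"] mult_ac)
       (subst sum.swap, simp)
  also have "\<dots> \<le> 1/2 * (\<Sum>b<N. (\<Sum>q1<2^L. W q1 b))"
  proof -
    have "(\<Sum>q2<2^L. hF K q2 b) * (\<Sum>q1<2^L. W q1 b) \<le> (\<Sum>q1<2^L. W q1 b)" for b
    proof -
      have "(\<Sum>q2<2^L. hF K q2 b) \<le> 1" unfolding hF_def by (rule sum_ind_le)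
      moreover have "(\<Sum>q1<2^L. W q1 b) \<ge> 0" using W0 by (simp add: sum_nonneg)
      moreover have "(\<Sum>q2<2^L. hF K q2 b) \<ge> 0" using hF0 by (simp add: sum_nonneg)
      ultimately show ?thesis by (intro mult_left_le_one_le)
    qed
    thus ?thesis by (intro mult_left_mono sum_mono) auto
  qed
  also have "\<dots> \<le> 1/2 * (\<Sum>b<N. \<Sum>i<N-1. cmod (D (Suc i) b - D i b))"
  proof -
    have "(\<Sum>q1<2^L. W q1 b) \<le> (\<Sum>i<N-1. cmod (D (Suc i) b - D i b))" for b
    proof -
      have "(\<Sum>q1<2^L. W q1 b) = (\<Sum>i<N-1. \<Sum>q1<2^L. (if i div K = q1 then cmod (D (Suc i) b - D i b) else 0))"
        unfolding W_def by (rule sum.swap)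
      also have "\<dots> \<le> (\<Sum>i<N-1. cmod (D (Suc i) b - D i b))"
      proof (rule sum_mono)
        fix i assume "i \<in> {..<N-1}"
        show "(\<Sum>q1<2 ^ L. if i div K = q1 then cmod (D (Suc i) b - D i b) else 0) \<le> cmod (D (Suc i) b - D i b)"
          using sum_ind_le2[of "\<lambda>_. cmod (D (Suc i) b - D i b)" "2^L" i K] by simp
      qed
      finally show ?thesis .
    qed
    thus ?thesis by (intro mult_left_mono sum_mono) auto
  qed
  also have "\<dots> = 1/2 * (\<Sum>j<N-1. \<Sum>k<N. cmod (D (Suc j) k - D j k))"
    by (subst sum.swap) simp
  finally show ?thesis unfolding K_def .
qed


definition cf :: "nat \<Rightarrow> (nat \<Rightarrow> nat \<Rightarrow> complex) \<Rightarrow> nat \<Rightarrow> nat \<Rightarrow> complex" where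
  "cf n D j k = (\<Sum>a<2^n. \<Sum>b<2^n. D a b * of_real (hbr n j k a b))"

lemma haar_cf: "haar n D j k = (if j < 2^n \<and> k < 2^n then cf n D j k else 0)"
  unfolding haar_def cf_def hb_real by simp

definition hX :: "nat \<Rightarrow> bool \<Rightarrow> nat \<Rightarrow> nat \<Rightarrow> real" where
  "hX K' e q x = (if e then hT K' q x else hF (2*K') q x)"

lemma hbr_hX:
  assumes "L < n" "q1 < 2 ^ L" "q2 < 2 ^ L" "e1 \<or> e2" "a < 2 ^ n" "b < 2 ^ n"
  shows "hbr n (pos e1 L q1) (pos e2 L q2) a b =
     hX (2^(n - Suc L)) e1 q1 a * hX (2^(n - Suc L)) e2 q2 b / real (2 * 2^(n - Suc L))"
proof -
  define K' :: nat where "K' = 2 ^ (n - Suc L)"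
  have K'0: "K' > 0" unfolding K'_def by simp
  have KK: "(2::nat) ^ (n - L) = 2 * K'" unfolding K'_def using pow_split[OF assms(1)] .
  have h: "haar1 e (real x / real ((2::nat) ^ (n - L)) - real q) = hX K' e q x" for e q x
  proof (cases e)
    case True thus ?thesis unfolding KK hX_def hT_def using hh_T[OF K'0, of x q] by simp
  next
    case False
    have "2 * K' > 0" using K'0 by simp
    thus ?thesis unfolding KK hX_def hF_def using False hh_F[of "2*K'" x q] by simp
  qed
  have c: "(2::real) ^ L / 2 ^ n = 1 / real (2 * K')"
  proof -
    have "(2::real) ^ n = 2 ^ L * 2 ^ (n - L)" using assms(1) by (simp add: power_add[symmetric])
    moreover have "real (2 * K') = 2 ^ (n - L)" using KK by (metis of_nat_numeral of_nat_power)
    ultimately show ?thesis by simp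
  qed
  show ?thesis unfolding hbr_level[OF assms] h c K'_def[symmetric] by simp
qed

lemma hX_bound: "\<bar>hX K' e q b\<bar> \<le> hF (2*K') q b"
  unfolding hX_def hT_def hF_def by auto

lemma cf_piece:
  assumes "L < n" "q1 < 2 ^ L" "q2 < 2 ^ L" "e1 \<or> e2"
  shows "cf n D (pos e1 L q1) (pos e2 L q2) =
    (\<Sum>a<2^n. \<Sum>b<2^n. D a b * of_real (hX (2^(n - Suc L)) e1 q1 a * hX (2^(n - Suc L)) e2 q2 b / real (2 * 2^(n - Suc L))))"
  unfolding cf_def using hbr_hX[OF assms] by (intro sum.cong refl) simp

lemma NL: "L < n \<Longrightarrow> 2 ^ L * (2 * 2 ^ (n - Suc L)) = (2::nat) ^ n"
proof -
  assume "L < n"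
  hence "n = L + Suc (n - Suc L)" by simp
  hence "(2::nat)^n = 2^L * 2^Suc (n - Suc L)" by (metis power_add)
  thus ?thesis by simp
qed

lemma level_bound:
  assumes Ln: "L < n"
  shows "(\<Sum>j<2^Suc L. \<Sum>k<2^Suc L. cmod (cf n D j k)) \<le> (\<Sum>j<2^L. \<Sum>k<2^L. cmod (cf n D j k)) + tv (2^n) D"
proof -
  define K' :: nat where "K' = 2 ^ (n - Suc L)"
  define N :: nat where "N = 2 ^ n"
  have K'0: "K' > 0" unfolding K'_def by simp
  have NL': "2^L * (2*K') = N" unfolding K'_def N_def using NL[OF Ln] .
  define Vert where "Vert = (\<Sum>j<N-1. \<Sum>k<N. cmod (D (Suc j) k - D j k))"
  define Hor where "Hor = (\<Sum>j<N. \<Sum>k<N-1. cmod (D j (Suc k) - D j k))"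
  have tvEq: "tv (2^n) D = Vert + Hor" unfolding tv_def Vert_def Hor_def N_def by simp
  have Hor0: "Hor \<ge> 0" unfolding Hor_def by (intro sum_nonneg) auto
  have pTe: "(\<Sum>q1<2^L. \<Sum>q2<2^L. cmod (cf n D (pos True L q1) (pos e2 L q2))) \<le> 1/2 * Vert" for e2
  proof -
    have "(\<Sum>q1<2^L. \<Sum>q2<2^L. cmod (cf n D (pos True L q1) (pos e2 L q2))) =
      (\<Sum>q1<2^L. \<Sum>q2<2^L. cmod (\<Sum>a<N. \<Sum>b<N. D a b * of_real (hT K' q1 a * hX K' e2 q2 b / real (2*K'))))"
      using cf_piece[OF Ln, of _ _ True e2 D] unfolding K'_def N_def hX_def by (intro sum.cong refl) simp
    also have "\<dots> \<le> 1/2 * Vert" unfolding Vert_def using core[OF K'0 NL' hX_bound] by simp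
    finally show ?thesis .
  qed
  have pFT: "(\<Sum>q1<2^L. \<Sum>q2<2^L. cmod (cf n D (pos False L q1) (pos True L q2))) \<le> 1/2 * Hor"
  proof -
    define DT where "DT = (\<lambda>x y. D y x)"
    have "(\<Sum>q1<2^L. \<Sum>q2<2^L. cmod (cf n D (pos False L q1) (pos True L q2))) =
      (\<Sum>q1<2^L. \<Sum>q2<2^L. cmod (\<Sum>a<N. \<Sum>b<N. D a b * of_real (hF (2*K') q1 a * hT K' q2 b / real (2*K'))))"
      using cf_piece[OF Ln, of _ _ False True D] unfolding K'_def N_def hX_def by (intro sum.cong refl) simp
    also have "\<dots> = (\<Sum>q2<2^L. \<Sum>q1<2^L. cmod (\<Sum>b<N. \<Sum>a<N. DT b a * of_real (hT K' q2 b * hF (2*K') q1 a / real (2*K'))))"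
      unfolding DT_def by (subst sum.swap) (intro sum.cong refl, subst (2) sum.swap, simp add: mult_ac)
    also have "\<dots> \<le> 1/2 * (\<Sum>j<N-1. \<Sum>k<N. cmod (DT (Suc j) k - DT j k))"
      using core[OF K'0 NL', of "\<lambda>q x. hF (2*K') q x" DT] unfolding hF_def by simp
    also have "(\<Sum>j<N-1. \<Sum>k<N. cmod (DT (Suc j) k - DT j k)) = Hor"
      unfolding DT_def Hor_def by (rule sum.swap)
    finally show ?thesis .
  qed
  let ?f = "\<lambda>j k. cmod (cf n D j k)"
  have "(\<Sum>j<2^Suc L. \<Sum>k<2^Suc L. ?f j k) = (\<Sum>j<2 ^ L. \<Sum>k<2 ^ L. ?f j k)
   + (\<Sum>q1<2 ^ L. \<Sum>q2<2 ^ L. ?f (pos False L q1) (pos True L q2))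
   + (\<Sum>q1<2 ^ L. \<Sum>q2<2 ^ L. ?f (pos True L q1) (pos False L q2))
   + (\<Sum>q1<2 ^ L. \<Sum>q2<2 ^ L. ?f (pos True L q1) (pos True L q2))" by (rule sum_split22)
  also have "\<dots> \<le> (\<Sum>j<2 ^ L. \<Sum>k<2 ^ L. ?f j k) + 1/2 * Hor + 1/2 * Vert + 1/2 * Vert"
    using pFT pTe[of False] pTe[of True] by linarith
  also have "\<dots> \<le> (\<Sum>j<2 ^ L. \<Sum>k<2 ^ L. ?f j k) + tv (2^n) D" using tvEq Hor0 by simp
  finally show ?thesis .
qed


lemma tail_bound:
  assumes "L0 \<le> n"
  shows "(\<Sum>j<2^n. \<Sum>k<2^n. cmod (cf n D j k)) \<le> (\<Sum>j<2^L0. \<Sum>k<2^L0. cmod (cf n D j k)) + real (n - L0) * tv (2^n) D"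
proof -
  have "d + L0 \<le> n \<Longrightarrow> (\<Sum>j<2^(L0+d). \<Sum>k<2^(L0+d). cmod (cf n D j k)) \<le> (\<Sum>j<2^L0. \<Sum>k<2^L0. cmod (cf n D j k)) + real d * tv (2^n) D" for d
  proof (induction d)
    case 0 thus ?case by simp
  next
    case (Suc d)
    have "L0 + d < n" using Suc.prems by simp
    from level_bound[OF this, of D]
    have "(\<Sum>j<2^(L0 + Suc d). \<Sum>k<2^(L0 + Suc d). cmod (cf n D j k)) \<le> (\<Sum>j<2^(L0+d). \<Sum>k<2^(L0+d). cmod (cf n D j k)) + tv (2^n) D"
      by simp
    also have "\<dots> \<le> (\<Sum>j<2^L0. \<Sum>k<2^L0. cmod (cf n D j k)) + real d * tv (2^n) D + tv (2^n) D"
      using Suc.IH Suc.prems by simp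
    finally show ?case by (simp add: algebra_simps)
  qed
  from this[of "n - L0"] show ?thesis using assms by simp
qed

lemma sum4_swap: "(\<Sum>j<N. \<Sum>k<N. \<Sum>a<M. \<Sum>b<M. f j k a b) = (\<Sum>a<M. \<Sum>b<M. \<Sum>j<N. \<Sum>k<(N::nat). f j k a (b::nat) :: 'z::comm_monoid_add)"
proof -
  have "(\<Sum>j<N. \<Sum>k<N. \<Sum>a<M. \<Sum>b<M. f j k a b) = (\<Sum>j<N. \<Sum>a<M. \<Sum>k<N. \<Sum>b<M. f j k a b)"
    by (rule sum.cong[OF refl], rule sum.swap)
  also have "\<dots> = (\<Sum>a<M. \<Sum>j<N. \<Sum>k<N. \<Sum>b<M. f j k a b)" by (rule sum.swap)
  also have "\<dots> = (\<Sum>a<M. \<Sum>j<N. \<Sum>b<M. \<Sum>k<N. f j k a b)"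
    by (rule sum.cong[OF refl], rule sum.cong[OF refl], rule sum.swap)
  also have "\<dots> = (\<Sum>a<M. \<Sum>b<M. \<Sum>j<N. \<Sum>k<N. f j k a b)"
    by (rule sum.cong[OF refl], rule sum.swap)
  finally show ?thesis .
qed

lemma recon_pt:
  assumes "a < 2^n" "b < 2^n"
  shows "(\<Sum>j<2^n. \<Sum>k<2^n. cf n D j k * of_real (hbr n j k a b)) = D a b"
proof -
  have "(\<Sum>j<2^n. \<Sum>k<2^n. cf n D j k * of_real (hbr n j k a b))
     = (\<Sum>j<2^n. \<Sum>k<2^n. \<Sum>a'<2^n. \<Sum>b'<2^n. D a' b' * of_real (hbr n j k a' b' * hbr n j k a b))"
    unfolding cf_def by (simp add: sum_distrib_right mult.assoc)
  also have "\<dots> = (\<Sum>a'<2^n. \<Sum>b'<2^n. \<Sum>j<2^n. \<Sum>k<2^n. D a' b' * of_real (hbr n j k a' b' * hbr n j k a b))"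
    by (rule sum4_swap)
  also have "\<dots> = (\<Sum>a'<2^n. \<Sum>b'<2^n. D a' b' * of_real (\<Sum>j<2^n. \<Sum>k<2^n. hbr n j k a' b' * hbr n j k a b))"
    by (simp add: sum_distrib_left)
  also have "\<dots> = (\<Sum>a'<2^n. \<Sum>b'<2^n. (if a' = a then (if b' = b then D a' b' else 0) else 0))"
    using assms by (intro sum.cong refl) (simp add: kernel_full)
  also have "\<dots> = (\<Sum>a'<2^n. if a' = a then D a b else 0)"
  proof (rule sum.cong[OF refl])
    fix a' show "(\<Sum>b'<2^n. (if a' = a then (if b' = b then D a' b' else 0) else 0)) = (if a' = a then D a b else 0)"
      using assms by (cases "a' = a") (simp_all add: sum.delta)
  qed
  also have "\<dots> = D a b" using assms by (simp add: sum.delta)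
  finally show ?thesis .
qed

lemma haar_inv_haar:
  assumes "D \<in> mats (2^n)"
  shows "haar_inv n (haar n D) = D"
proof (intro ext)
  fix a b
  show "haar_inv n (haar n D) a b = D a b"
  proof (cases "a < 2^n \<and> b < 2^n")
    case True
    have "haar_inv n (haar n D) a b = (\<Sum>j<2^n. \<Sum>k<2^n. cf n D j k * of_real (hbr n j k a b))"
      unfolding haar_inv_def haar_cf hb_real by (intro sum.cong refl) simp
    thus ?thesis using recon_pt True by simp
  next
    case False
    hence "D a b = 0" using assms unfolding mats_def by auto
    moreover have "haar_inv n (haar n D) a b = 0" unfolding haar_inv_def hb_real using False hbr_out by simp
    ultimately show ?thesis by simp
  qed
qed

lemma sqn: "(complex_of_real (cmod z))^2 = z * cnj z"
  using complex_norm_square[of z] by simp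

lemma parseval:
  shows "(\<Sum>a<2^n. \<Sum>b<2^n. (cmod (D a b))^2) = (\<Sum>j<2^n. \<Sum>k<2^n. (cmod (cf n D j k))^2)"
proof -
  have "complex_of_real (\<Sum>a<2^n. \<Sum>b<2^n. (cmod (D a b))^2) = (\<Sum>a<2^n. \<Sum>b<2^n. D a b * cnj (D a b))"
    by (simp add: sqn)
  also have "\<dots> = (\<Sum>a<2^n. \<Sum>b<2^n. D a b * cnj (\<Sum>j<2^n. \<Sum>k<2^n. cf n D j k * of_real (hbr n j k a b)))"
    by (intro sum.cong refl) (simp add: recon_pt)
  also have "\<dots> = (\<Sum>a<2^n. \<Sum>b<2^n. \<Sum>j<2^n. \<Sum>k<2^n. cnj (cf n D j k) * (D a b * of_real (hbr n j k a b)))"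
    by (simp add: sum_distrib_left mult_ac)
  also have "\<dots> = (\<Sum>j<2^n. \<Sum>k<2^n. \<Sum>a<2^n. \<Sum>b<2^n. cnj (cf n D j k) * (D a b * of_real (hbr n j k a b)))"
    by (rule sum4_swap[symmetric])
  also have "\<dots> = (\<Sum>j<2^n. \<Sum>k<2^n. cf n D j k * cnj (cf n D j k))"
  proof (rule sum.cong[OF refl], rule sum.cong[OF refl])
    fix j k
    have "(\<Sum>a<2^n. \<Sum>b<2^n. cnj (cf n D j k) * (D a b * of_real (hbr n j k a b)))
       = cnj (cf n D j k) * (\<Sum>a<2^n. \<Sum>b<2^n. D a b * of_real (hbr n j k a b))"
      by (simp add: sum_distrib_left)
    also have "(\<Sum>a<2^n. \<Sum>b<2^n. D a b * of_real (hbr n j k a b)) = cf n D j k" by (simp add: cf_def)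
    finally show "(\<Sum>a<2^n. \<Sum>b<2^n. cnj (cf n D j k) * (D a b * of_real (hbr n j k a b)))
       = cf n D j k * cnj (cf n D j k)" by (simp add: mult.commute)
  qed
  also have "\<dots> = complex_of_real (\<Sum>j<2^n. \<Sum>k<2^n. (cmod (cf n D j k))^2)"
    by (simp add: sqn)
  finally show ?thesis using of_real_eq_iff by blast
qed


lemma log_count:
  fixes n L s :: nat
  assumes "L < n" "s < 4^(L+1)" "2 * s < 4^n" "1 \<le> s"
  shows "real (n - L) \<le> 3 * ln (real (4^n) / real s)"
proof -
  define X where "X = real (4^n) / real s"
  have s0: "real s > 0" using assms by simp
  have "real (2 * s) < real (4^n)" using assms(3) by (simp only: of_nat_less_iff)
  hence "2 * real s < 4^n" by simp
  hence X2: "X > 2" unfolding X_def using s0 by (simp add: pos_less_divide_eq)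
  have "s * 4^(n-L-1) \<le> 4^(L+1) * 4^(n-L-1)" using assms(2) by simp
  also have "\<dots> = 4^n"
  proof -
    have "L + 1 + (n - L - 1) = n" using assms(1) by simp
    thus ?thesis by (metis power_add)
  qed
  finally have "real (s * 4^(n-L-1)) \<le> real (4^n)" by (simp only: of_nat_le_iff)
  hence "real s * 4^(n-L-1) \<le> 4^n" by simp
  hence X4: "X \<ge> 4^(n-L-1)" unfolding X_def using s0 by (simp add: field_simps)
  have "ln X \<ge> ln (4^(n-L-1))" using X4 by (intro ln_mono) auto
  hence l1: "ln X \<ge> real (n-L-1) * ln 4" by (simp add: ln_realpow)
  have "ln (4::real) = 2 * ln 2" using ln_realpow[of 2 2] by simp
  hence l4: "ln (4::real) \<ge> 4/3" using ln2_ge_two_thirds by simp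
  have "ln 2 \<le> ln X" using X2 by simp
  hence l2: "ln X \<ge> 2/3" using ln2_ge_two_thirds by linarith
  have "real (n-L-1) * (4/3) \<le> real (n-L-1) * ln 4" using l4 by (intro mult_left_mono) auto
  hence "real (n-L-1) \<le> 3/4 * ln X" using l1 by simp
  moreover have "real (n - L) = real (n-L-1) + 1" using assms(1) by simp
  ultimately show ?thesis unfolding X_def[symmetric] using l2 by simp
qed


lemma fro_as: "fro N X = sqrt (\<Sum>p\<in>{..<N}\<times>{..<N}. (cmod (X (fst p) (snd p)))^2)"
  unfolding fro_def by (simp add: sum.cartesian_product case_prod_beta)

lemma haar_inv_mats: "haar_inv n X \<in> mats (2^n)"
  unfolding mats_def haar_inv_def hb_real using hbr_out by auto

lemma haar_inv_add: "haar_inv n (\<lambda>j k. X j k + Y j k) = (\<lambda>a b. haar_inv n X a b + haar_inv n Y a b)"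
  unfolding haar_inv_def by (simp add: sum.distrib distrib_right)

lemma sqrt_bound: assumes "x\<^sup>2 \<le> c * y\<^sup>2" "x \<ge> 0" "y \<ge> 0" shows "x \<le> sqrt c * y"
proof -
  have "sqrt (x\<^sup>2) \<le> sqrt (c * y\<^sup>2)" using assms(1) by (rule real_sqrt_le_mono)
  thus ?thesis using assms(2,3) by (simp add: real_sqrt_mult)
qed

lemma sqrt_bound2: assumes "c * y\<^sup>2 \<le> x\<^sup>2" "x \<ge> 0" "y \<ge> 0" shows "sqrt c * y \<le> x"
proof -
  have "sqrt (c * y\<^sup>2) \<le> sqrt (x\<^sup>2)" using assms(1) by (rule real_sqrt_le_mono)
  thus ?thesis using assms(2,3) by (simp add: real_sqrt_mult)
qed

lemma main_bound:
  fixes B :: "(nat \<Rightarrow> nat \<Rightarrow> complex) \<Rightarrow> nat \<Rightarrow> complex" and D :: "nat \<Rightarrow> nat \<Rightarrow> complex"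
  assumes lin: "lin_on_mats (2 ^ n) B" and rip: "rip (2 ^ n) m (B \<circ> haar_inv n) (2 * s) \<delta>"
    and s1: "1 \<le> s" and sM: "s \<le> (2 ^ n)\<^sup>2" and Dm: "D \<in> mats (2 ^ n)" and eps: "vnorm m (B D) \<le> \<epsilon>"
    and d0: "0 \<le> d" and dd: "\<delta> \<le> d" and d1: "d < 1"
  shows "fro (2 ^ n) D \<le> max (1 / sqrt (1 - d)) (3 * (sqrt (1 + d) / sqrt (1 - d) + 1)) *
     (tv (2 ^ n) D / sqrt (real s) * ln (real ((2 ^ n)\<^sup>2) / real s) + \<epsilon>)"
proof -
  define N :: nat where "N = 2 ^ n"
  define r0 where "r0 = sqrt (1 - d)"
  define r1 where "r1 = sqrt (1 + d)"
  define C where "C = max (1 / r0) (3 * (r1 / r0 + 1))"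
  have r0: "r0 > 0" unfolding r0_def using d1 by simp
  have r1: "r1 \<ge> 0" unfolding r1_def using d0 by simp
  define I where "I = {..<N} \<times> {..<N}"
  define c where "c = haar n D"
  define w where "w p = cmod (c (fst p) (snd p))" for p
  define rs where "rs T = (\<lambda>j k. if (j, k) \<in> T then c j k else 0)" for T
  define A where "A T = B (haar_inv n (rs T))" for T
  have finI: "finite I" unfolding I_def by simp
  have wpos: "\<forall>p. w p \<ge> 0" unfolding w_def by simp
  have cI: "card I = N^2" unfolding I_def by (simp add: power2_eq_square)
  have c_out: "c j k = 0" if "\<not> (j < N \<and> k < N)" for j k
    using that unfolding c_def N_def by (auto simp: haar_cf)
  have rs_mats: "rs T \<in> mats N" if "T \<subseteq> I" for T
    using that unfolding mats_def rs_def I_def by auto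
  have rs_card: "card {(j,k). j < N \<and> k < N \<and> rs T j k \<noteq> 0} \<le> card T" if "T \<subseteq> I" for T
  proof -
    have "finite T" using that finI finite_subset by auto
    moreover have "{(j,k). j < N \<and> k < N \<and> rs T j k \<noteq> 0} \<subseteq> T" unfolding rs_def by auto
    ultimately show ?thesis by (rule card_mono)
  qed
  have rs_fro: "fro N (rs T) = n2 w T" if "T \<subseteq> I" for T
  proof -
    have "fro N (rs T) = sqrt (\<Sum>p\<in>I. (cmod (rs T (fst p) (snd p)))^2)" unfolding fro_as I_def ..
    also have "(\<Sum>p\<in>I. (cmod (rs T (fst p) (snd p)))^2) = (\<Sum>p\<in>I. if p \<in> T then (w p)^2 else 0)"
      unfolding rs_def w_def by (intro sum.cong refl) auto
    also have "\<dots> = (\<Sum>p\<in>I \<inter> T. (w p)^2)" using finI by (rule sum.inter_restrict[symmetric])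
    also have "I \<inter> T = T" using that by blast
    finally show ?thesis unfolding n2_def .
  qed
  have ripT: "(1 - \<delta>) * (fro N (rs T))\<^sup>2 \<le> (vnorm m (A T))\<^sup>2 \<and> (vnorm m (A T))\<^sup>2 \<le> (1 + \<delta>) * (fro N (rs T))\<^sup>2"
    if "T \<subseteq> I" "card T \<le> 2 * s" for T
  proof -
    have "card {(j,k). j < N \<and> k < N \<and> rs T j k \<noteq> 0} \<le> 2 * s" using rs_card[OF that(1)] that(2) by linarith
    moreover have "\<forall>X\<in>mats N. card {(j,k). j < N \<and> k < N \<and> X j k \<noteq> 0} \<le> 2 * s \<longrightarrow>
        (1 - \<delta>) * (fro N X)\<^sup>2 \<le> (vnorm m ((B \<circ> haar_inv n) X))\<^sup>2 \<and>
        (vnorm m ((B \<circ> haar_inv n) X))\<^sup>2 \<le> (1 + \<delta>) * (fro N X)\<^sup>2"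
      using rip unfolding rip_def N_def .
    ultimately show ?thesis using rs_mats[OF that(1)] unfolding A_def o_def by blast
  qed
  have up: "vnorm m (A T) \<le> r1 * n2 w T" if "T \<subseteq> I" "card T \<le> 2 * s" for T
  proof -
    have "(vnorm m (A T))\<^sup>2 \<le> (1 + d) * (fro N (rs T))\<^sup>2"
    proof -
      have "(1 + \<delta>) * (fro N (rs T))\<^sup>2 \<le> (1 + d) * (fro N (rs T))\<^sup>2" using dd by (intro mult_right_mono) auto
      thus ?thesis using ripT[OF that] by linarith
    qed
    hence "vnorm m (A T) \<le> sqrt (1 + d) * fro N (rs T)"
      by (rule sqrt_bound) (simp_all add: vnorm_nonneg fro_def sum_nonneg)
    thus ?thesis unfolding r1_def rs_fro[OF that(1)] .
  qed
  have lo: "r0 * n2 w T \<le> vnorm m (A T)" if "T \<subseteq> I" "card T \<le> 2 * s" for T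
  proof -
    have "(1 - d) * (fro N (rs T))\<^sup>2 \<le> (vnorm m (A T))\<^sup>2"
    proof -
      have "(1 - d) * (fro N (rs T))\<^sup>2 \<le> (1 - \<delta>) * (fro N (rs T))\<^sup>2" using dd by (intro mult_right_mono) auto
      thus ?thesis using ripT[OF that] by linarith
    qed
    hence "sqrt (1 - d) * fro N (rs T) \<le> vnorm m (A T)"
      by (rule sqrt_bound2) (simp_all add: vnorm_nonneg fro_def sum_nonneg)
    thus ?thesis unfolding r0_def rs_fro[OF that(1)] .
  qed
  have add: "A (T \<union> U) = (\<lambda>i. A T i + A U i)" if "T \<subseteq> I" "U \<subseteq> I" "T \<inter> U = {}" for T U
  proof -
    have "rs (T \<union> U) = (\<lambda>j k. rs T j k + rs U j k)" unfolding rs_def using that(3) by (auto intro!: ext)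
    hence "haar_inv n (rs (T \<union> U)) = (\<lambda>a b. haar_inv n (rs T) a b + haar_inv n (rs U) a b)"
      by (simp add: haar_inv_add)
    moreover have "B (\<lambda>a b. haar_inv n (rs T) a b + haar_inv n (rs U) a b) = (\<lambda>i. B (haar_inv n (rs T)) i + B (haar_inv n (rs U)) i)"
    proof -
      have "\<forall>X\<in>mats (2^n). \<forall>Y\<in>mats (2^n). B (\<lambda>j k. X j k + Y j k) = (\<lambda>i. B X i + B Y i)"
        using lin unfolding lin_on_mats_def by simp
      thus ?thesis using haar_inv_mats[of n "rs T"] haar_inv_mats[of n "rs U"] by simp
    qed
    ultimately show ?thesis unfolding A_def by simp
  qed
  have rsI: "rs I = c" unfolding rs_def I_def using c_out by (auto intro!: ext)
  have AI: "A I = B D" unfolding A_def rsI c_def using haar_inv_haar[OF Dm] by simp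
  have n2I: "n2 w I = fro N D"
  proof -
    have "fro N D = sqrt (\<Sum>a<N. \<Sum>b<N. (cmod (D a b))^2)" unfolding fro_def ..
    also have "\<dots> = sqrt (\<Sum>j<N. \<Sum>k<N. (cmod (cf n D j k))^2)" unfolding N_def using parseval[of D n] by (rule arg_cong[where f=sqrt])
    also have "(\<Sum>j<N. \<Sum>k<N. (cmod (cf n D j k))^2) = (\<Sum>p\<in>I. (w p)^2)"
      unfolding I_def w_def c_def by (simp add: sum.cartesian_product case_prod_beta haar_cf N_def) (intro sum.cong refl, auto)
    finally show ?thesis unfolding n2_def by simp
  qed
  have vAI: "vnorm m (A I) \<le> \<epsilon>" using AI eps by simp
  have tv0: "tv N D \<ge> 0" unfolding tv_def by (intro add_nonneg_nonneg sum_nonneg) auto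
  have lnpos: "ln (real (N^2) / real s) \<ge> 0"
  proof -
    have "real s \<le> real (N^2)" using sM unfolding N_def by (simp only: of_nat_le_iff)
    moreover have "real s > 0" using s1 by simp
    ultimately have "real (N^2) / real s \<ge> 1" by simp
    thus ?thesis by simp
  qed
  have ep0: "\<epsilon> \<ge> 0" using eps vnorm_nonneg order_trans by blast
  have Cge: "C \<ge> 1 / r0" "C \<ge> 3 * (r1 / r0 + 1)" unfolding C_def by auto
  have C0: "C \<ge> 0" using Cge(1) r0 by (smt (verit) divide_pos_pos)
  have rest0: "tv N D / sqrt (real s) * ln (real (N^2) / real s) \<ge> 0" using tv0 lnpos by simp
  have "fro N D \<le> C * (tv N D / sqrt (real s) * ln (real (N^2) / real s) + \<epsilon>)"
  proof (cases "N^2 \<le> 2 * s")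
    case True
    have "r0 * fro N D \<le> \<epsilon>" using lo[of I] True cI n2I vAI by simp
    hence "fro N D \<le> \<epsilon> / r0" using r0 by (simp add: pos_le_divide_eq mult.commute)
    also have "\<dots> = (1 / r0) * \<epsilon>" by simp
    also have "\<dots> \<le> C * \<epsilon>" using Cge ep0 by (intro mult_right_mono) auto
    also have "\<dots> \<le> C * (tv N D / sqrt (real s) * ln (real (N^2) / real s) + \<epsilon>)"
      using rest0 C0 by (intro mult_left_mono) auto
    finally show ?thesis .
  next
    case False
    obtain L where L: "4^L \<le> s" "s < 4^(L+1)" using ex_power_ivl1[of 4 s] s1 by auto
    have N4: "N^2 = 4^n" unfolding N_def by (simp add: power2_eq_square power_mult_distrib[symmetric])
    have Ln: "L < n"
    proof (rule ccontr)
      assume "\<not> L < n"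
      hence "(4::nat)^n \<le> 4^L" by simp
      thus False using L False N4 s1 by linarith
    qed
    define S :: "(nat \<times> nat) set" where "S = {..<2^L} \<times> {..<2^L}"
    have p2: "(2::nat)^L \<le> 2^n" by (rule power_increasing) (use Ln in auto)
    have h2: "j < 2^n" if "j < 2^L" for j :: nat using that p2 by linarith
    have SI: "S \<subseteq> I" unfolding S_def I_def N_def using h2 by auto
    have cS: "card S \<le> s" unfolding S_def using L(1) by (simp add: power_mult_distrib[symmetric])
    have cI2: "2 * s \<le> card I" using cI False by simp
    have main: "n2 w I \<le> (vnorm m (A I) + r1 * (n1 w (I - S) / sqrt s)) / r0 + n1 w (I - S) / sqrt s"
      by (rule rip_abstract[OF finI add up lo s1 wpos r1 r0 cI2 SI cS])
    have n1S: "n1 w (I - S) \<le> real (n - L) * tv N D"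
    proof -
      have "n1 w (I - S) = n1 w I - n1 w S" unfolding n1_def using finI SI sum.subset_diff[of S I w] by simp
      also have "n1 w I = (\<Sum>j<2^n. \<Sum>k<2^n. cmod (cf n D j k))"
        unfolding n1_def I_def w_def c_def N_def by (simp add: sum.cartesian_product case_prod_beta haar_cf) (intro sum.cong refl, auto)
      also have "n1 w S = (\<Sum>j<2^L. \<Sum>k<2^L. cmod (cf n D j k))"
        unfolding n1_def S_def w_def c_def
        by (simp add: sum.cartesian_product case_prod_beta haar_cf) (intro sum.cong refl, auto simp: h2)
      finally show ?thesis using tail_bound[of L n D] Ln unfolding N_def by simp
    qed
    define \<sigma> where "\<sigma> = n1 w (I - S) / sqrt s"
    have sq: "sqrt (real s) > 0" using s1 by simp
    have sig: "\<sigma> \<le> real (n - L) * tv N D / sqrt s" unfolding \<sigma>_def using n1S sq by (simp add: divide_right_mono)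
    have lc: "real (n - L) \<le> 3 * ln (real (N^2) / real s)"
      using log_count[OF Ln L(2) _ s1] False N4 by simp
    have sig2: "\<sigma> \<le> 3 * (tv N D / sqrt s * ln (real (N^2) / real s))"
    proof -
      have "real (n - L) * tv N D / sqrt s = real (n - L) * (tv N D / sqrt s)" by simp
      also have "\<dots> \<le> 3 * ln (real (N^2) / real s) * (tv N D / sqrt s)"
        using lc tv0 sq by (intro mult_right_mono) auto
      also have "\<dots> = 3 * (tv N D / sqrt s * ln (real (N^2) / real s))" by (simp only: mult_ac)
      finally show ?thesis using sig by linarith
    qed
    have "sum w (I - S) \<ge> 0" using wpos by (intro sum_nonneg) blast
    hence sig0: "\<sigma> \<ge> 0" unfolding \<sigma>_def n1_def using sq by simp
    have "fro N D \<le> (\<epsilon> + r1 * \<sigma>) / r0 + \<sigma>"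
    proof -
      have "(vnorm m (A I) + r1 * \<sigma>) / r0 \<le> (\<epsilon> + r1 * \<sigma>) / r0" using vAI r0 by (simp add: divide_right_mono)
      thus ?thesis using main n2I unfolding \<sigma>_def by simp
    qed
    also have "\<dots> = (1 / r0) * \<epsilon> + (r1 / r0 + 1) * \<sigma>" by (simp add: field_simps add_divide_distrib)
    also have "\<dots> \<le> C * \<epsilon> + (r1 / r0 + 1) * (3 * (tv N D / sqrt s * ln (real (N^2) / real s)))"
      using Cge ep0 sig2 r0 r1 by (intro add_mono mult_right_mono mult_left_mono) auto
    also have "\<dots> \<le> C * \<epsilon> + C * (tv N D / sqrt s * ln (real (N^2) / real s))"
    proof -
      define R where "R = tv N D / sqrt s * ln (real (N^2) / real s)"
      have "(r1 / r0 + 1) * (3 * R) = (3 * (r1 / r0 + 1)) * R" by simp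
      also have "\<dots> \<le> C * R" using Cge(2) rest0 unfolding R_def by (intro mult_right_mono) auto
      finally show ?thesis unfolding R_def by simp
    qed
    finally show ?thesis by (simp add: distrib_left)
  qed
  thus ?thesis unfolding C_def r0_def r1_def N_def .
qed

theorem theorem8:
  fixes \<delta> :: real
  assumes "\<delta> < 1"
  shows "\<exists>C>0. \<forall>(n::nat) (s::nat) (m::nat) B D (\<epsilon>::real).
     lin_on_mats (2 ^ n) B \<and> rip (2 ^ n) m (B \<circ> haar_inv n) (2 * s) \<delta> \<and>
     1 \<le> s \<and> s \<le> (2 ^ n)\<^sup>2 \<and> D \<in> mats (2 ^ n) \<and> vnorm m (B D) \<le> \<epsilon> \<longrightarrow>
     fro (2 ^ n) D \<le> C * (tv (2 ^ n) D / sqrt (real s) * ln (real ((2 ^ n)\<^sup>2) / real s) + \<epsilon>)"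
proof -
  define d where "d = max \<delta> 0"
  have d0: "0 \<le> d" and dd: "\<delta> \<le> d" and d1: "d < 1" using assms unfolding d_def by auto
  define C where "C = max (1 / sqrt (1 - d)) (3 * (sqrt (1 + d) / sqrt (1 - d) + 1))"
  have "1 / sqrt (1 - d) > 0" using d1 by simp
  hence C0: "C > 0" unfolding C_def by (meson less_max_iff_disj)
  show ?thesis
  proof (intro exI[of _ C] conjI allI impI)
    show "C > 0" by (rule C0)
  next
    fix n s m B D \<epsilon>
    assume h: "lin_on_mats (2 ^ n) B \<and> rip (2 ^ n) m (B \<circ> haar_inv n) (2 * s) \<delta> \<and>
     1 \<le> s \<and> s \<le> (2 ^ n)\<^sup>2 \<and> D \<in> mats (2 ^ n) \<and> vnorm m (B D) \<le> \<epsilon>"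
    show "fro (2 ^ n) D \<le> C * (tv (2 ^ n) D / sqrt (real s) * ln (real ((2 ^ n)\<^sup>2) / real s) + \<epsilon>)"
      unfolding C_def using main_bound[of n B m s \<delta> D \<epsilon> d] h d0 dd d1 by blast
  qed
qed

end
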